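(* In the setting below: (1) Suppose for $d=0,1$: $\mathrm{Cov}(W,\lambda_d(P)\mid D=d)=0$, $\mathrm{Cov}(WW',\lambda_d(P)\mid D=d)=0$ and $\mathrm{Cov}(W,\lambda_d(P)^2\mid D=d)=0$. Then $\widetilde{\mathrm{ATE}}-\mathrm{ATE}=(E[W]-E[W\mid D=1])'\eta_1\,E[\lambda_1(P)\mid D=1]-(E[W]-E[W\mid D=0])'\eta_0\,E[\lambda_0(P)\mid D=0]$, $\widetilde{\mathrm{CATE}}(w)-\mathrm{CATE}(w)=(w-E[W\mid D=1])'\eta_1\,E[\lambda_1(P)\mid D=1]-(w-E[W\mid D=0])'\eta_0\,E[\lambda_0(P)\mid D=0]$ for every $w\in\mathbb R^L$, and $\widetilde{\mathrm{Slope}}-\mathrm{Slope}=(E[W\mid D=1]-E[W\mid D=0])'\big(P(D=0)\eta_1+P(D=1)\eta_0\big)$. (2) If in addition $E[W\mid D=1]=E[W\mid D=0]$, then $\widetilde{\mathrm{ATE}}=\mathrm{ATE}$ and $\widetilde{\mathrm{Slope}}=\mathrm{Slope}$.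
   Context: Setting: random elements $(Y_0,Y_1,D,Z,W,U)$ with covariates $W\in\mathbb R^L$, $Y=(1-D)Y_0+DY_1$. Assume $U\mid W$ is uniform on $[0,1]$, $Z$ is independent of $U$ given $W$, $P=P(D=1\mid Z,W)\in(0,1)$ a.s., $D=\mathbb 1[U\le P]$, and $E[Y_d\mid Z,W,U]=E[Y_d\mid W,U]=\mu_d+W'\tau_d+\rho_d(W)h(U)$ with $\rho_d(w)=\rho_d+w'\eta_d$ (scalars $\mu_d,\rho_d$, vectors $\tau_d,\eta_d\in\mathbb R^L$), where $h$ is strictly increasing and continuous on $(0,1)$ with $\int_0^1h(u)du=0$. Define $\lambda_1(p)=\frac1p\int_0^ph(u)du$ and $\lambda_0(p)=\frac1{1-p}\int_p^1h(u)du$; under these assumptions $E[Y\mid D=d,W,P]=\mu_d+W'\tau_d+\rho_d\lambda_d(P)+W'\eta_d\lambda_d(P)$. The misspecified ("additively separable") coefficients $(\tilde\mu_d,\tilde\tau_d',\tilde\rho_d)'$ are the population least squares coefficients of $Y$ on $(1,W',\lambda_d(P))'$ in the subpopulation $D=d$, i.e. $E[RR'\mid D=d]^{-1}E[RY\mid D=d]$ with $R=(1,W',\lambda_d(P))'$. Assume all relevant second moments are finite, $\mathrm{Var}(W\mid D=d)$ is nonsingular, $\mathrm{Var}(\lambda_d(P)\mid D=d)>0$, and $0<P(D=1)<1$. Targets: $\mathrm{ATE}=\mu_1-\mu_0+E[W]'(\tau_1-\tau_0)$, $\mathrm{CATE}(w)=\mu_1-\mu_0+w'(\tau_1-\tau_0)$,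 $\mathrm{Slope}=E[\rho_1(W)-\rho_0(W)]$; estimands: $\widetilde{\mathrm{ATE}}=\tilde\mu_1-\tilde\mu_0+E[W]'(\tilde\tau_1-\tilde\tau_0)$, $\widetilde{\mathrm{CATE}}(w)=\tilde\mu_1-\tilde\mu_0+w'(\tilde\tau_1-\tilde\tau_0)$, $\widetilde{\mathrm{Slope}}=\tilde\rho_1-\tilde\rho_0$. *)

theory Defs
  imports "HOL-Probability.Probability"
begin

definition sigma_gen :: "'o measure \<Rightarrow> 'a measure \<Rightarrow> ('o \<Rightarrow> 'a) \<Rightarrow> 'o measure" where
  "sigma_gen M N X = vimage_algebra (space M) X N"

definition cond_indep :: "'o measure \<Rightarrow> 'o measure \<Rightarrow> ('o \<Rightarrow> 'a) \<Rightarrow> 'a measure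
    \<Rightarrow> ('o \<Rightarrow> 'b) \<Rightarrow> 'b measure \<Rightarrow> bool" where
  "cond_indep M F X MX V MV \<longleftrightarrow>
     (\<forall>A\<in>sets MX. \<forall>B\<in>sets MV. AE \<omega> in M.
        real_cond_exp M F (\<lambda>\<omega>. indicator (X -` A \<inter> space M) \<omega> * indicator (V -` B \<inter> space M) \<omega>) \<omega>
        = real_cond_exp M F (indicator (X -` A \<inter> space M)) \<omega>
          * real_cond_exp M F (indicator (V -` B \<inter> space M)) \<omega>)"

definition cexp :: "'o measure \<Rightarrow> 'o set \<Rightarrow> ('o \<Rightarrow> real) \<Rightarrow> real" where
  "cexp M A X = (\<integral>\<omega>. indicator A \<omega> * X \<omega> \<partial>M) / measure M A"

definition ccov :: "'o measure \<Rightarrow> 'o set \<Rightarrow> ('o \<Rightarrow> real) \<Rightarrow> ('o \<Rightarrow> real) \<Rightarrow> real" where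
  "ccov M A X V = cexp M A (\<lambda>\<omega>. X \<omega> * V \<omega>) - cexp M A X * cexp M A V"

definition evec :: "'o measure \<Rightarrow> ('o \<Rightarrow> real^'l) \<Rightarrow> real^'l" where
  "evec M W = (\<chi> i. \<integral>\<omega>. W \<omega> $ i \<partial>M)"

definition cvec :: "'o measure \<Rightarrow> 'o set \<Rightarrow> ('o \<Rightarrow> real^'l) \<Rightarrow> real^'l" where
  "cvec M A W = (\<chi> i. cexp M A (\<lambda>\<omega>. W \<omega> $ i))"

definition lam :: "(real \<Rightarrow> real) \<Rightarrow> nat \<Rightarrow> real \<Rightarrow> real" where
  "lam h d p = (if d = 1 then (1 / p) * (LBINT u=0..p. h u)
                else (1 / (1 - p)) * (LBINT u=p..1. h u))"

text \<open>Index type of the regressor vector R = (1, W', lambda_d(P))'.\<close>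
datatype 'l reg_idx = RConst | RCov 'l | RLam

lemma UNIV_reg_idx: "(UNIV :: 'l reg_idx set) = insert RConst (insert RLam (range RCov))"
  by (auto intro: reg_idx.exhaust)

instance reg_idx :: (finite) finite
  by standard (simp add: UNIV_reg_idx)

definition regr :: "('o \<Rightarrow> real^'l::finite) \<Rightarrow> ('o \<Rightarrow> real) \<Rightarrow> 'o \<Rightarrow> real^('l reg_idx)" where
  "regr W Lm \<omega> = (\<chi> i. case i of RConst \<Rightarrow> 1 | RCov l \<Rightarrow> W \<omega> $ l | RLam \<Rightarrow> Lm \<omega>)"

definition ls_coef :: "'o measure \<Rightarrow> 'o set \<Rightarrow> ('o \<Rightarrow> real^'l::finite) \<Rightarrow> ('o \<Rightarrow> real)
    \<Rightarrow> ('o \<Rightarrow> real) \<Rightarrow> real^('l reg_idx)" where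
  "ls_coef M A W Lm Y =
     matrix_inv (\<chi> i j. cexp M A (\<lambda>\<omega>. regr W Lm \<omega> $ i * regr W Lm \<omega> $ j))
       *v (\<chi> i. cexp M A (\<lambda>\<omega>. regr W Lm \<omega> $ i * Y \<omega>))"

definition ls_mu :: "real^('l::finite reg_idx) \<Rightarrow> real" where "ls_mu b = b $ RConst"
definition ls_tau :: "real^('l::finite reg_idx) \<Rightarrow> real^'l" where "ls_tau b = (\<chi> l. b $ RCov l)"
definition ls_rho :: "real^('l::finite reg_idx) \<Rightarrow> real" where "ls_rho b = b $ RLam"

end

theory Submission
  imports Defs
begin

lemma cofinal_seq:
  fixes I :: "real set"
  assumes "I \<noteq> {}"
  shows "\<exists>r::nat\<Rightarrow>real. (\<forall>n. r n \<in> I) \<and> (\<forall>p\<in>I. \<exists>n. p \<le> r n)"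
proof (cases "bdd_above I")
  case True
  show ?thesis
  proof (cases "Sup I \<in> I")
    case True
    then show ?thesis by (intro exI[of _ "\<lambda>_. Sup I"]) (auto intro: cSup_upper[OF _ \<open>bdd_above I\<close>])
  next
    case False
    have "\<forall>n::nat. \<exists>x\<in>I. Sup I - 1/(real n+1) < x"
      using assms True by (subst less_cSup_iff[symmetric]) auto
    then obtain r where r: "\<And>n. r n \<in> I \<and> Sup I - 1/(real n+1) < r n" by metis
    show ?thesis
    proof (intro exI[of _ r] conjI ballI allI)
      fix n show "r n \<in> I" using r by auto
    next
      fix p assume p: "p \<in> I"
      have "p \<le> Sup I" using cSup_upper[OF p True] .
      moreover have "p \<noteq> Sup I" using p False by auto
      ultimately have "0 < Sup I - p" by simp
      then obtain n where "1/(real n+1) < Sup I - p"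
        using nat_approx_posE by (metis of_nat_Suc add.commute)
      then show "\<exists>n. p \<le> r n" using r[of n] by (intro exI[of _ n]) auto
    qed
  qed
next
  case False
  have "\<forall>n::nat. \<exists>x\<in>I. real n < x" using False
    by (metis bdd_above_def linorder_not_le)
  then obtain r where r: "\<And>n. r n \<in> I \<and> real n < r n" by metis
  show ?thesis
  proof (intro exI[of _ r] conjI ballI allI)
    fix n show "r n \<in> I" using r by auto
  next
    fix p assume "p \<in> I"
    obtain n where "p \<le> real n" using real_arch_simple by blast
    then show "\<exists>n. p \<le> r n" using r[of n] by (intro exI[of _ n]) auto
  qed
qed

lemma meas_mono_family:
  fixes f :: "real \<Rightarrow> real" and A :: "real \<Rightarrow> real set"
  assumes mono: "\<And>p q. p \<le> q \<Longrightarrow> A p \<subseteq> A q"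
    and pm[measurable]: "Measurable.pred (borel \<Otimes>\<^sub>M borel) (\<lambda>(p,x). x \<in> A p)"
  shows "(\<lambda>p. integral\<^sup>L lborel (\<lambda>x. indicator (A p) x * f x)) \<in> borel_measurable borel"
proof -
  have Ameas[measurable]: "A p \<in> sets borel" for p
  proof -
    have "Measurable.pred borel (\<lambda>x. (\<lambda>(p,x). x \<in> A p) (p, x))" by measurable
    then show ?thesis by (simp add: pred_def)
  qed
  define I where "I = {p. integrable lborel (\<lambda>x. indicator (A p) x * f x)}"
  have down: "q \<in> I" if "p \<in> I" "q \<le> p" for p q
  proof -
    have i1: "integrable lborel (\<lambda>x. indicator (A p) x * f x)" using that(1) unfolding I_def by blast
    have aq: "A q \<in> sets lborel" using Ameas[of q] by (simp only: sets_lborel)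
    have i2: "integrable lborel (\<lambda>x. indicator (A q) x *\<^sub>R (indicator (A p) x * f x))"
      by (rule integrable_mult_indicator[OF aq i1])
    have eqp: "indicator (A q) x *\<^sub>R (indicator (A p) x * f x) = indicator (A q) x * f x" for x
    proof (cases "x \<in> A q")
      case True
      then have "x \<in> A p" using mono[OF that(2)] by blast
      then show ?thesis using True by simp
    qed simp
    have eq: "(\<lambda>x. indicator (A q) x *\<^sub>R (indicator (A p) x * f x)) = (\<lambda>x. indicator (A q) x * f x)"
      using eqp by (rule ext)
    have "integrable lborel (\<lambda>x. indicator (A q) x * f x)" using i2 by (simp only: eq)
    then show ?thesis unfolding I_def by blast
  qed
  let ?g = "\<lambda>p. integral\<^sup>L lborel (\<lambda>x. indicator (A p) x * f x)"
  show ?thesis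
  proof (cases "I = {}")
    case True
    then have "?g = (\<lambda>_. 0)" unfolding I_def by (auto intro!: ext not_integrable_integral_eq)
    then show ?thesis by simp
  next
    case False
    from cofinal_seq[OF False] obtain r :: "nat \<Rightarrow> real" where r1: "\<forall>n. r n \<in> I" and r2: "\<forall>p\<in>I. \<exists>n. p \<le> r n"
      by (elim exE conjE)
    have r: "\<And>n. r n \<in> I" "\<And>p. p \<in> I \<Longrightarrow> \<exists>n. p \<le> r n" using r1 r2 by simp_all
    define r' where "r' n = Max (r ` {..n})" for n
    have r'I: "r' n \<in> I" for n
    proof -
      have "r' n \<in> r ` {..n}" unfolding r'_def by (intro Max_in) auto
      then show ?thesis using r(1) by auto
    qed
    have r'ge: "r m \<le> r' n" if "m \<le> n" for m n
      unfolding r'_def using that by (intro Max_ge) auto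
    have r'mono: "r' m \<le> r' n" if "m \<le> n" for m n
    proof -
      have "r' m \<in> r ` {..m}" unfolding r'_def by (intro Max_in) auto
      then obtain k where "k \<le> m" "r' m = r k" by auto
      then show ?thesis using r'ge[of k n] that by simp
    qed
    define Fn where "Fn n x = indicator (A (r' n)) x * f x" for n x
    have Fn_meas[measurable]: "Fn n \<in> borel_measurable borel" for n
    proof -
      have "integrable lborel (Fn n)" using r'I[of n] unfolding I_def Fn_def by simp
      then show ?thesis by auto
    qed
    define G where "G n p = indicator {..r' n} p * integral\<^sup>L lborel (\<lambda>x. indicator (A p) x * Fn n x)" for n p
    have G_meas: "G n \<in> borel_measurable borel" for n
    proof -
      have "(\<lambda>p. integral\<^sup>L lborel (\<lambda>x. indicator (A p) x * Fn n x)) \<in> borel_measurable borel"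
      proof (rule lborel.borel_measurable_lebesgue_integral)
        show "(\<lambda>(p, x). indicator (A p) x * Fn n x) \<in> borel_measurable (borel \<Otimes>\<^sub>M lborel)"
        proof -
          have "(\<lambda>(p, x). indicator (A p) x * Fn n x) = (\<lambda>px. (if (\<lambda>(p,x). x \<in> A p) px then 1 else 0) * Fn n (snd px))"
            by (auto simp: indicator_def fun_eq_iff)
          also have "\<dots> \<in> borel_measurable (borel \<Otimes>\<^sub>M lborel)"
            by measurable
          finally show ?thesis .
        qed
      qed
      then show ?thesis unfolding G_def by measurable
    qed
    have lim: "(\<lambda>n. G n p) \<longlonglongrightarrow> ?g p" for p
    proof (cases "p \<in> I")
      case True
      then obtain n0 where "p \<le> r n0" using r(2) by blast
      then have ev: "p \<le> r' n" if "n0 \<le> n" for n using r'ge[OF that] by simp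
      have "G n p = ?g p" if "n0 \<le> n" for n
      proof -
        have "A p \<subseteq> A (r' n)" using mono ev[OF that] by simp
        then have "indicator (A p) x * Fn n x = indicator (A p) x * f x" for x
          unfolding Fn_def by (auto simp: indicator_def)
        then have "(\<lambda>x. indicator (A p) x * Fn n x) = (\<lambda>x. indicator (A p) x * f x)" by (rule ext)
        then show ?thesis unfolding G_def using ev[OF that] by simp
      qed
      then show ?thesis
        by (intro tendsto_eventually) (auto simp: eventually_sequentially)
    next
      case False
      have "G n p = 0" for n
      proof -
        have "\<not> p \<le> r' n" using False down[OF r'I[of n]] by auto
        then show ?thesis unfolding G_def by simp
      qed
      moreover have "?g p = 0" using False unfolding I_def by (auto intro: not_integrable_integral_eq)
      ultimately show ?thesis by simp
    qed
    show ?thesis by (rule borel_measurable_LIMSEQ_real[OF lim G_meas])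
  qed
qed

lemma meas_anti_family:
  fixes f :: "real \<Rightarrow> real" and A :: "real \<Rightarrow> real set"
  assumes anti: "\<And>p q. p \<le> q \<Longrightarrow> A q \<subseteq> A p"
    and pm[measurable]: "Measurable.pred (borel \<Otimes>\<^sub>M borel) (\<lambda>(p,x). x \<in> A p)"
  shows "(\<lambda>p. integral\<^sup>L lborel (\<lambda>x. indicator (A p) x * f x)) \<in> borel_measurable borel"
proof -
  have "(\<lambda>p. integral\<^sup>L lborel (\<lambda>x. indicator (A (- p)) x * f x)) \<in> borel_measurable borel"
  proof (rule meas_mono_family)
    show "A (- p) \<subseteq> A (- q)" if "p \<le> q" for p q using anti that by simp
    have "(\<lambda>(p,x). x \<in> A (- p)) = (\<lambda>(p,x). x \<in> A p) \<circ> (\<lambda>(p,x). (-p, x))" by auto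
    also have "Measurable.pred (borel \<Otimes>\<^sub>M borel) \<dots>"
      by (intro measurable_comp[OF _ pm]) measurable
    finally show "Measurable.pred (borel \<Otimes>\<^sub>M borel) (\<lambda>(p,x). x \<in> A (- p))" .
  qed
  then have "(\<lambda>p. (\<lambda>p. integral\<^sup>L lborel (\<lambda>x. indicator (A (- p)) x * f x)) (- p)) \<in> borel_measurable borel"
    by measurable
  then show ?thesis by simp
qed

lemma einterval_01:
  "einterval 0 (ereal p) = {0<..<p}" "einterval (ereal p) 0 = {p<..<0}"
  "einterval 1 (ereal p) = {1<..<p}" "einterval (ereal p) 1 = {p<..<1}"
  "(0::ereal) \<le> ereal p \<longleftrightarrow> 0 \<le> p" "ereal p \<le> (1::ereal) \<longleftrightarrow> p \<le> 1"
  by (auto simp: einterval_def)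

lemma lam_borel: "lam h d \<in> borel_measurable borel"
proof -
  have m1: "(\<lambda>p. integral\<^sup>L lborel (\<lambda>x. indicator {0<..<p} x * h x)) \<in> borel_measurable borel"
    by (rule meas_mono_family) auto
  have m2: "(\<lambda>p. integral\<^sup>L lborel (\<lambda>x. indicator {p<..<0} x * h x)) \<in> borel_measurable borel"
    by (rule meas_anti_family) auto
  have m3: "(\<lambda>p. integral\<^sup>L lborel (\<lambda>x. indicator {p<..<1} x * h x)) \<in> borel_measurable borel"
    by (rule meas_anti_family) auto
  have m4: "(\<lambda>p. integral\<^sup>L lborel (\<lambda>x. indicator {1<..<p} x * h x)) \<in> borel_measurable borel"
    by (rule meas_mono_family) auto
  have e1p: "lam h 1 p = (1/p) * (if 0 \<le> p then integral\<^sup>L lborel (\<lambda>x. indicator {0<..<p} x * h x)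
        else - integral\<^sup>L lborel (\<lambda>x. indicator {p<..<0} x * h x))" for p
    unfolding lam_def interval_lebesgue_integral_def set_lebesgue_integral_def einterval_01
    by simp
  have e0p: "d \<noteq> 1 \<Longrightarrow> lam h d p = (1/(1-p)) * (if p \<le> 1 then integral\<^sup>L lborel (\<lambda>x. indicator {p<..<1} x * h x)
        else - integral\<^sup>L lborel (\<lambda>x. indicator {1<..<p} x * h x))" for p
    unfolding lam_def interval_lebesgue_integral_def set_lebesgue_integral_def einterval_01
    by simp
  have e1: "lam h 1 = (\<lambda>p. (1/p) * (if 0 \<le> p then integral\<^sup>L lborel (\<lambda>x. indicator {0<..<p} x * h x)
        else - integral\<^sup>L lborel (\<lambda>x. indicator {p<..<0} x * h x)))"
    using e1p by (intro ext) blast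
  have e0: "d \<noteq> 1 \<Longrightarrow> lam h d = (\<lambda>p. (1/(1-p)) * (if p \<le> 1 then integral\<^sup>L lborel (\<lambda>x. indicator {p<..<1} x * h x)
        else - integral\<^sup>L lborel (\<lambda>x. indicator {1<..<p} x * h x)))"
    using e0p by (intro ext) blast
  show ?thesis
  proof (cases "d = 1")
    case True
    show ?thesis unfolding True e1 using m1 m2 by measurable
  next
    case False
    show ?thesis unfolding e0[OF False] using m3 m4 by measurable
  qed
qed


lemma subalg_sigma_gen:
  assumes "X \<in> measurable M N"
  shows "subalgebra M (sigma_gen M N X)"
  unfolding subalgebra_def sigma_gen_def
  using sets_image_in_sets[of M "space M" X N] assms by simp

lemma fms_sigma_gen:
  assumes "prob_space M" "X \<in> measurable M N"
  shows "finite_measure_subalgebra M (sigma_gen M N X)"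
proof -
  interpret prob_space M by fact
  show ?thesis
    by (rule finite_measure_subalgebra.intro[OF finite_measure_axioms])
       (simp add: finite_measure_subalgebra_axioms_def subalg_sigma_gen[OF assms(2)])
qed

lemma rect_unif:
  fixes Z :: "'o \<Rightarrow> 'z" and W :: "'o \<Rightarrow> 'w::topological_space" and U :: "'o \<Rightarrow> real"
  assumes prob: "prob_space M" and Zm[measurable]: "Z \<in> measurable M Mz"
    and Wm[measurable]: "W \<in> borel_measurable M"
    and Um[measurable]: "U \<in> borel_measurable M"
    and U_unif: "\<forall>B\<in>sets borel. AE \<omega> in M.
         real_cond_exp M (sigma_gen M borel W) (indicator (U -` B \<inter> space M)) \<omega>
         = measure lborel (B \<inter> {0..1})"
    and indep: "cond_indep M (sigma_gen M borel W) Z Mz U borel"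
    and A[measurable]: "A \<in> sets Mz" and C[measurable]: "C \<in> sets borel" and B[measurable]: "B \<in> sets borel"
  shows "measure M ((Z -` A \<inter> space M) \<inter> (W -` C \<inter> space M) \<inter> (U -` B \<inter> space M))
    = measure M ((Z -` A \<inter> space M) \<inter> (W -` C \<inter> space M)) * measure lborel (B \<inter> {0..1})"
proof -
  interpret prob_space M by (rule prob)
  let ?FW = "sigma_gen M borel W"
  interpret FW: finite_measure_subalgebra M ?FW by (rule fms_sigma_gen[OF prob Wm])
  define SA where "SA = Z -` A \<inter> space M"
  define SB where "SB = U -` B \<inter> space M"
  define SC where "SC = W -` C \<inter> space M"
  define c where "c = measure lborel (B \<inter> {0..1})"
  have [measurable]: "SA \<in> sets M" "SB \<in> sets M" "SC \<in> sets M" unfolding SA_def SB_def SC_def by measurable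
  have SCF: "SC \<in> sets ?FW" unfolding SC_def sigma_gen_def by (rule in_vimage_algebra) simp
  have iCF[measurable]: "indicator SC \<in> borel_measurable ?FW"
    using SCF by (rule borel_measurable_indicator)
  have int1: "integrable M (\<lambda>\<omega>. indicator SC \<omega> * (indicator SA \<omega> * indicator SB \<omega> :: real))"
  proof -
    have "(\<lambda>\<omega>. indicator SC \<omega> * (indicator SA \<omega> * indicator SB \<omega> :: real)) = indicator (SC \<inter> (SA \<inter> SB))"
      by (auto simp: indicator_def fun_eq_iff)
    moreover have "integrable M (indicator (SC \<inter> (SA \<inter> SB)) :: 'o \<Rightarrow> real)"
      by (intro integrable_real_indicator) (auto simp: less_top[symmetric])
    ultimately show ?thesis by simp
  qed
  have int2: "integrable M (\<lambda>\<omega>. indicator SC \<omega> * (indicator SA \<omega> :: real))"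
  proof -
    have "(\<lambda>\<omega>. indicator SC \<omega> * (indicator SA \<omega> :: real)) = indicator (SC \<inter> SA)"
      by (auto simp: indicator_def fun_eq_iff)
    moreover have "integrable M (indicator (SC \<inter> SA) :: 'o \<Rightarrow> real)"
      by (intro integrable_real_indicator) (auto simp: less_top[symmetric])
    ultimately show ?thesis by simp
  qed
  have "measure M (SA \<inter> SC \<inter> SB) = (\<integral>\<omega>. indicator SC \<omega> * (indicator SA \<omega> * indicator SB \<omega>) \<partial>M)"
  proof -
    have "(\<lambda>\<omega>. indicator SC \<omega> * (indicator SA \<omega> * indicator SB \<omega> :: real)) = indicator (SA \<inter> SC \<inter> SB)"
      by (auto simp: indicator_def fun_eq_iff)
    moreover have "SA \<inter> SC \<inter> SB \<inter> space M = SA \<inter> SC \<inter> SB" unfolding SA_def by auto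
    ultimately show ?thesis by simp
  qed
  also have "\<dots> = (\<integral>\<omega>. indicator SC \<omega> * real_cond_exp M ?FW (\<lambda>\<omega>. indicator SA \<omega> * indicator SB \<omega>) \<omega> \<partial>M)"
    by (rule FW.real_cond_exp_intg(2)[symmetric, OF int1]) measurable
  also have "\<dots> = (\<integral>\<omega>. indicator SC \<omega> * (real_cond_exp M ?FW (indicator SA) \<omega> * c) \<partial>M)"
  proof (rule integral_cong_AE)
    show "AE \<omega> in M. indicator SC \<omega> * real_cond_exp M ?FW (\<lambda>\<omega>. indicator SA \<omega> * indicator SB \<omega>) \<omega>
        = indicator SC \<omega> * (real_cond_exp M ?FW (indicator SA) \<omega> * c)"
    proof -
      have "AE \<omega> in M. real_cond_exp M ?FW (\<lambda>\<omega>. indicator SA \<omega> * indicator SB \<omega>) \<omega>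
          = real_cond_exp M ?FW (indicator SA) \<omega> * real_cond_exp M ?FW (indicator SB) \<omega>"
        using indep A B unfolding cond_indep_def SA_def SB_def by blast
      moreover have "AE \<omega> in M. real_cond_exp M ?FW (indicator SB) \<omega> = c"
        using U_unif B unfolding SB_def c_def by blast
      ultimately show ?thesis by eventually_elim simp
    qed
  qed measurable
  also have "\<dots> = c * (\<integral>\<omega>. indicator SC \<omega> * real_cond_exp M ?FW (indicator SA) \<omega> \<partial>M)"
    by (simp add: ac_simps)
  also have "(\<integral>\<omega>. indicator SC \<omega> * real_cond_exp M ?FW (indicator SA) \<omega> \<partial>M) = (\<integral>\<omega>. indicator SC \<omega> * indicator SA \<omega> \<partial>M)"
    by (rule FW.real_cond_exp_intg(2)[OF int2]) measurable
  also have "(\<integral>\<omega>. indicator SC \<omega> * indicator SA \<omega> \<partial>M) = measure M (SA \<inter> SC)"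
  proof -
    have "(\<lambda>\<omega>. indicator SC \<omega> * (indicator SA \<omega> :: real)) = indicator (SA \<inter> SC)"
      by (auto simp: indicator_def fun_eq_iff)
    moreover have "SA \<inter> SC \<inter> space M = SA \<inter> SC" unfolding SA_def by auto
    ultimately show ?thesis by simp
  qed
  finally show ?thesis unfolding SA_def SB_def SC_def c_def by simp
qed


lemma ZW_unif:
  fixes Z :: "'o \<Rightarrow> 'z" and W :: "'o \<Rightarrow> 'w::topological_space" and U :: "'o \<Rightarrow> real"
  assumes prob: "prob_space M" and Zm[measurable]: "Z \<in> measurable M Mz"
    and Wm[measurable]: "W \<in> borel_measurable M"
    and Um[measurable]: "U \<in> borel_measurable M"
    and U_unif: "\<forall>B\<in>sets borel. AE \<omega> in M.
         real_cond_exp M (sigma_gen M borel W) (indicator (U -` B \<inter> space M)) \<omega>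
         = measure lborel (B \<inter> {0..1})"
    and indep: "cond_indep M (sigma_gen M borel W) Z Mz U borel"
    and S[measurable]: "S \<in> sets (Mz \<Otimes>\<^sub>M borel)" and B[measurable]: "B \<in> sets borel"
  shows "measure M ((\<lambda>\<omega>. (Z \<omega>, W \<omega>)) -` S \<inter> space M \<inter> (U -` B \<inter> space M))
    = measure M ((\<lambda>\<omega>. (Z \<omega>, W \<omega>)) -` S \<inter> space M) * measure lborel (B \<inter> {0..1})"
proof -
  interpret prob_space M by (rule prob)
  let ?ZW = "\<lambda>\<omega>. (Z \<omega>, W \<omega>)"
  have ZWm[measurable]: "?ZW \<in> measurable M (Mz \<Otimes>\<^sub>M borel)" by measurable
  define SB where "SB = U -` B \<inter> space M"
  define c where "c = measure lborel (B \<inter> {0..1})"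
  have c0: "0 \<le> c" unfolding c_def by simp
  have SBm[measurable]: "SB \<in> sets M" unfolding SB_def by measurable
  define \<mu>1 where "\<mu>1 = distr (density M (indicator SB)) (Mz \<Otimes>\<^sub>M borel) ?ZW"
  define \<mu>2 where "\<mu>2 = density (distr M (Mz \<Otimes>\<^sub>M borel) ?ZW) (\<lambda>_. ennreal c)"
  have e1: "emeasure \<mu>1 X = ennreal (measure M (?ZW -` X \<inter> space M \<inter> SB))" if X[measurable]: "X \<in> sets (Mz \<Otimes>\<^sub>M borel)" for X
  proof -
    have m: "?ZW \<in> measurable (density M (indicator SB)) (Mz \<Otimes>\<^sub>M borel)"
      by (simp add: measurable_cong_sets[OF sets_density refl])
    have "emeasure \<mu>1 X = emeasure (density M (indicator SB)) (?ZW -` X \<inter> space M)"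
      unfolding \<mu>1_def by (simp add: emeasure_distr[OF m X])
    also have "\<dots> = emeasure M (SB \<inter> (?ZW -` X \<inter> space M))"
      by (rule emeasure_restricted) (auto intro: SBm measurable_sets[OF ZWm X])
    finally show ?thesis by (simp add: emeasure_eq_measure Int_ac)
  qed
  have e2: "emeasure \<mu>2 X = ennreal (c * measure M (?ZW -` X \<inter> space M))" if X[measurable]: "X \<in> sets (Mz \<Otimes>\<^sub>M borel)" for X
  proof -
    have "emeasure \<mu>2 X = (\<integral>\<^sup>+ x. ennreal c * indicator X x \<partial>distr M (Mz \<Otimes>\<^sub>M borel) ?ZW)"
      unfolding \<mu>2_def by (rule emeasure_density) auto
    also have "\<dots> = ennreal c * emeasure (distr M (Mz \<Otimes>\<^sub>M borel) ?ZW) X"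
      by (rule nn_integral_cmult_indicator) simp
    also have "\<dots> = ennreal c * emeasure M (?ZW -` X \<inter> space M)"
      by (simp add: emeasure_distr)
    finally show ?thesis by (simp add: emeasure_eq_measure ennreal_mult'' c0)
  qed
  let ?E = "{a \<times> b | a b. a \<in> sets Mz \<and> b \<in> sets (borel :: 'w measure)}"
  have "\<mu>1 = \<mu>2"
  proof (rule measure_eqI_generator_eq[OF Int_stable_pair_measure_generator[of Mz "borel :: 'w measure"], where \<Omega>="space Mz \<times> UNIV" and A="\<lambda>_. space Mz \<times> UNIV"])
    show "?E \<subseteq> Pow (space Mz \<times> UNIV)" using sets.space_closed[of Mz] by auto
  next
    fix X assume "X \<in> ?E"
    then obtain a b where ab[measurable]: "X = a \<times> b" "a \<in> sets Mz" "b \<in> sets (borel :: 'w measure)" by auto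
    have Xm: "X \<in> sets (Mz \<Otimes>\<^sub>M borel)" using ab by simp
    have pre: "?ZW -` X \<inter> space M = (Z -` a \<inter> space M) \<inter> (W -` b \<inter> space M)" using ab(1) by auto
    have "measure M (?ZW -` X \<inter> space M \<inter> SB) = c * measure M (?ZW -` X \<inter> space M)"
      unfolding pre SB_def c_def
      using rect_unif[OF prob Zm Wm Um U_unif indep ab(2) ab(3) B] by simp
    then show "emeasure \<mu>1 X = emeasure \<mu>2 X" by (simp add: e1[OF Xm] e2[OF Xm])
  next
    show "sets \<mu>1 = sigma_sets (space Mz \<times> UNIV) ?E"
      unfolding \<mu>1_def by (simp add: sets_pair_measure)
  next
    show "sets \<mu>2 = sigma_sets (space Mz \<times> UNIV) ?E"
      unfolding \<mu>2_def by (simp add: sets_pair_measure)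
  next
    have "space Mz \<times> UNIV \<in> ?E" unfolding mem_Collect_eq by (intro exI[of _ "space Mz"] exI[of _ "UNIV::'w set"]) simp
    then show "range (\<lambda>_. space Mz \<times> UNIV) \<subseteq> ?E" by auto
  next
    show "(\<Union>i::nat. space Mz \<times> UNIV) = space Mz \<times> (UNIV :: 'w set)" by simp
  next
    fix i :: nat
    have "space Mz \<times> (UNIV :: 'w set) \<in> sets (Mz \<Otimes>\<^sub>M borel)"
      using sets.top[of "Mz \<Otimes>\<^sub>M borel"] by (simp add: space_pair_measure)
    then show "emeasure \<mu>1 (space Mz \<times> UNIV) \<noteq> \<infinity>" by (simp add: e1)
  qed
  then have "emeasure \<mu>1 S = emeasure \<mu>2 S" by simp
  then have "ennreal (measure M (?ZW -` S \<inter> space M \<inter> SB)) = ennreal (c * measure M (?ZW -` S \<inter> space M))"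
    by (simp add: e1 e2)
  then have "measure M (?ZW -` S \<inter> space M \<inter> SB) = c * measure M (?ZW -` S \<inter> space M)"
    using c0 by (subst (asm) ennreal_inj) auto
  then show ?thesis unfolding SB_def c_def by simp
qed


definition unif :: "real measure" where
  "unif = density lborel (\<lambda>x. ennreal (indicator {0..1} x))"

lemma sets_unif[measurable_cong, simp]: "sets unif = sets borel"
  by (simp add: unif_def)

lemma space_unif[simp]: "space unif = UNIV"
  by (simp add: unif_def)

lemma emeasure_unif: "B \<in> sets borel \<Longrightarrow> emeasure unif B = emeasure lborel ({0..1} \<inter> B)"
  unfolding unif_def ennreal_indicator by (rule emeasure_restricted) auto

lemma emeasure_unif_fin: "B \<in> sets borel \<Longrightarrow> emeasure unif B = ennreal (measure lborel (B \<inter> {0..1}))"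
proof -
  assume B: "B \<in> sets borel"
  have "emeasure lborel ({0..1} \<inter> B) \<le> emeasure lborel {0..(1::real)}"
    using B by (intro emeasure_mono) auto
  then have "emeasure lborel ({0..1} \<inter> B) \<noteq> top" by (auto simp: top_unique)
  then have "emeasure lborel ({0..1} \<inter> B) = ennreal (measure lborel ({0..1} \<inter> B))"
    by (rule emeasure_eq_ennreal_measure)
  then show ?thesis using B by (simp only: emeasure_unif Int_commute)
qed

lemma finite_unif: "finite_measure unif"
  by (rule finite_measureI) (simp add: emeasure_unif_fin[of UNIV])

lemma integral_unif:
  fixes f :: "real \<Rightarrow> real"
  assumes "f \<in> borel_measurable borel"
  shows "integral\<^sup>L unif f = (\<integral>x. indicator {0..1} x * f x \<partial>lborel)"
  unfolding unif_def using integral_density[of f lborel "indicator {0..1}"] assms by simp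

lemma joint_law:
  assumes prob: "prob_space M" and sub: "subalgebra M F" and Um[measurable]: "U \<in> borel_measurable M"
    and H: "\<And>G B. G \<in> sets F \<Longrightarrow> B \<in> sets borel \<Longrightarrow>
       measure M (G \<inter> (U -` B \<inter> space M)) = measure M G * measure lborel (B \<inter> {0..1})"
  shows "distr M (restr_to_subalg M F \<Otimes>\<^sub>M unif) (\<lambda>\<omega>. (\<omega>, U \<omega>)) = restr_to_subalg M F \<Otimes>\<^sub>M unif"
proof -
  interpret prob_space M by (rule prob)
  let ?R = "restr_to_subalg M F"
  have finR: "finite_measure ?R" by (rule finite_measure_restr_to_subalg[OF sub finite_measure_axioms])
  have idm: "(\<lambda>\<omega>. \<omega>) \<in> measurable M ?R"
    using sub unfolding measurable_def subalgebra_def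
    by (auto simp: space_restr_to_subalg sets_restr_to_subalg[OF sub] dest: sets.sets_into_space)
  have Um': "U \<in> measurable M unif" using Um by (simp add: measurable_cong_sets[OF refl sets_unif])
  have Tm: "(\<lambda>\<omega>. (\<omega>, U \<omega>)) \<in> measurable M (?R \<Otimes>\<^sub>M unif)"
    by (rule measurable_Pair[OF idm Um'])
  show ?thesis
  proof (rule sym, rule pair_measure_eqI)
    show "sigma_finite_measure ?R" using finR unfolding finite_measure_def by simp
    show "sigma_finite_measure unif" using finite_unif unfolding finite_measure_def by simp
    show "sets (?R \<Otimes>\<^sub>M unif) = sets (distr M (?R \<Otimes>\<^sub>M unif) (\<lambda>\<omega>. (\<omega>, U \<omega>)))" by simp
  next
    fix A B assume A: "A \<in> sets ?R" and B: "B \<in> sets unif"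
    have AF: "A \<in> sets F" using A by (simp add: sets_restr_to_subalg[OF sub])
    have AM: "A \<in> sets M" using AF sub unfolding subalgebra_def by auto
    have Bb: "B \<in> sets borel" using B by simp
    have AB: "A \<times> B \<in> sets (?R \<Otimes>\<^sub>M unif)" using A B by simp
    have pre: "(\<lambda>\<omega>. (\<omega>, U \<omega>)) -` (A \<times> B) \<inter> space M = A \<inter> (U -` B \<inter> space M)"
      using sets.sets_into_space[OF AM] by auto
    have "emeasure (distr M (?R \<Otimes>\<^sub>M unif) (\<lambda>\<omega>. (\<omega>, U \<omega>))) (A \<times> B) = emeasure M (A \<inter> (U -` B \<inter> space M))"
      by (simp add: emeasure_distr[OF Tm AB] pre)
    also have "\<dots> = ennreal (measure M A * measure lborel (B \<inter> {0..1}))"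
      by (simp add: emeasure_eq_measure H[OF AF Bb])
    also have "\<dots> = emeasure ?R A * emeasure unif B"
      by (simp add: ennreal_mult'' emeasure_restr_to_subalg[OF sub AF] emeasure_eq_measure emeasure_unif_fin[OF Bb])
    finally show "emeasure ?R A * emeasure unif B = emeasure (distr M (?R \<Otimes>\<^sub>M unif) (\<lambda>\<omega>. (\<omega>, U \<omega>))) (A \<times> B)"
      by simp
  qed
qed

lemma fubini_unif:
  fixes \<phi> :: "'o \<times> real \<Rightarrow> real"
  assumes prob: "prob_space M" and sub: "subalgebra M F" and Um[measurable]: "U \<in> borel_measurable M"
    and H: "\<And>G B. G \<in> sets F \<Longrightarrow> B \<in> sets borel \<Longrightarrow>
       measure M (G \<inter> (U -` B \<inter> space M)) = measure M G * measure lborel (B \<inter> {0..1})"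
    and phi[measurable]: "\<phi> \<in> borel_measurable (restr_to_subalg M F \<Otimes>\<^sub>M unif)"
    and int: "integrable M (\<lambda>\<omega>. \<phi> (\<omega>, U \<omega>))"
  shows "(\<integral>\<omega>. \<phi> (\<omega>, U \<omega>) \<partial>M) = (\<integral>\<omega>. (\<integral>u. \<phi> (\<omega>, u) \<partial>unif) \<partial>M)"
    and "(\<lambda>\<omega>. (\<integral>u. \<phi> (\<omega>, u) \<partial>unif)) \<in> borel_measurable F"
proof -
  interpret prob_space M by (rule prob)
  let ?R = "restr_to_subalg M F"
  let ?T = "\<lambda>\<omega>. (\<omega>, U \<omega>)"
  have finR: "finite_measure ?R" by (rule finite_measure_restr_to_subalg[OF sub finite_measure_axioms])
  interpret R: sigma_finite_measure ?R using finR unfolding finite_measure_def by simp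
  interpret Un: sigma_finite_measure unif using finite_unif unfolding finite_measure_def by simp
  interpret P: pair_sigma_finite ?R unif ..
  have idm: "(\<lambda>\<omega>. \<omega>) \<in> measurable M ?R"
    using sub unfolding measurable_def subalgebra_def
    by (auto simp: space_restr_to_subalg sets_restr_to_subalg[OF sub] dest: sets.sets_into_space)
  have Um': "U \<in> measurable M unif" using Um by (simp add: measurable_cong_sets[OF refl sets_unif])
  have Tm: "?T \<in> measurable M (?R \<Otimes>\<^sub>M unif)"
    by (rule measurable_Pair[OF idm Um'])
  have JL: "distr M (?R \<Otimes>\<^sub>M unif) ?T = ?R \<Otimes>\<^sub>M unif" by (rule joint_law[OF prob sub Um H])
  have intP: "integrable (?R \<Otimes>\<^sub>M unif) \<phi>"
    using int integrable_distr_eq[OF Tm phi] JL by simp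
  have innerR: "(\<lambda>\<omega>. (\<integral>u. \<phi> (\<omega>, u) \<partial>unif)) \<in> borel_measurable ?R"
    by (rule Un.borel_measurable_lebesgue_integral) simp
  show innerF: "(\<lambda>\<omega>. (\<integral>u. \<phi> (\<omega>, u) \<partial>unif)) \<in> borel_measurable F"
    by (rule measurable_in_subalg'[OF sub innerR])
  have "(\<integral>\<omega>. \<phi> (\<omega>, U \<omega>) \<partial>M) = integral\<^sup>L (distr M (?R \<Otimes>\<^sub>M unif) ?T) \<phi>"
    by (rule integral_distr[symmetric, OF Tm phi])
  also have "\<dots> = integral\<^sup>L (?R \<Otimes>\<^sub>M unif) \<phi>" by (simp add: JL)
  also have "\<dots> = (\<integral>\<omega>. (\<integral>u. \<phi> (\<omega>, u) \<partial>unif) \<partial>?R)"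
    by (rule P.integral_fst'[symmetric, OF intP])
  also have "\<dots> = (\<integral>\<omega>. (\<integral>u. \<phi> (\<omega>, u) \<partial>unif) \<partial>M)"
    by (rule integral_subalgebra2[OF sub innerF])
  finally show "(\<integral>\<omega>. \<phi> (\<omega>, U \<omega>) \<partial>M) = (\<integral>\<omega>. (\<integral>u. \<phi> (\<omega>, u) \<partial>unif) \<partial>M)" .
qed


lemma lam_meas[measurable]: "f \<in> borel_measurable M \<Longrightarrow> (\<lambda>x. lam h d (f x)) \<in> borel_measurable M"
  by (rule measurable_compose[OF _ lam_borel])

lemma lam_prod:
  assumes "0 < p" "p < 1" "d = 0 \<or> d = 1"
  shows "(if d = 1 then p else 1 - p) * lam h d p =
    (if d = 1 then (\<integral>u. indicator {0<..<p} u * h u \<partial>lborel) else (\<integral>u. indicator {p<..<1} u * h u \<partial>lborel))"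
  using assms
  unfolding lam_def interval_lebesgue_integral_def set_lebesgue_integral_def einterval_01
  by auto

lemma sel_inner:
  fixes h :: "real \<Rightarrow> real"
  assumes hcont: "continuous_on {0<..<1} h" and p: "0 < p" "p < 1" and d: "d = 0 \<or> d = 1"
  defines "h' \<equiv> \<lambda>u. indicator {0<..<1} u * h u"
  shows "(\<integral>u. indicator {0..1} u * ((if (if d = 1 then u \<le> p else \<not> u \<le> p) then (1::real) else 0) * h' u) \<partial>lborel)
      = (if d = 1 then p else 1 - p) * lam h d p"
    and "(\<integral>u. indicator {0..1} u * (if (if d = 1 then u \<le> p else \<not> u \<le> p) then (1::real) else 0) \<partial>lborel)
      = (if d = 1 then p else 1 - p)"
proof -
  have h'm[measurable]: "h' \<in> borel_measurable borel"
    unfolding h'_def using borel_measurable_continuous_on_indicator[OF _ hcont] by simp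
  show "(\<integral>u. indicator {0..1} u * ((if (if d = 1 then u \<le> p else \<not> u \<le> p) then (1::real) else 0) * h' u) \<partial>lborel)
      = (if d = 1 then p else 1 - p) * lam h d p"
  proof (cases "d = 1")
    case True
    have "(\<integral>u. indicator {0..1} u * ((if (if d = 1 then u \<le> p else \<not> u \<le> p) then (1::real) else 0) * h' u) \<partial>lborel)
        = (\<integral>u. indicator {0<..p} u * h' u \<partial>lborel)"
      by (rule Bochner_Integration.integral_cong[OF refl]) (use True p in \<open>auto simp: indicator_def h'_def\<close>)
    also have "\<dots> = (\<integral>u. indicator {0<..<p} u * h' u \<partial>lborel)"
      by (intro integral_cong_AE) (auto intro!: eventually_mono[OF AE_lborel_singleton[of p]] simp: indicator_def)
    also have "\<dots> = (\<integral>u. indicator {0<..<p} u * h u \<partial>lborel)"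
      by (rule Bochner_Integration.integral_cong[OF refl]) (use p in \<open>auto simp: indicator_def h'_def\<close>)
    finally show ?thesis using lam_prod[OF p d, of h] True by simp
  next
    case False
    then have d0: "d = 0" using d by simp
    have "(\<integral>u. indicator {0..1} u * ((if (if d = 1 then u \<le> p else \<not> u \<le> p) then (1::real) else 0) * h' u) \<partial>lborel)
        = (\<integral>u. indicator {p<..<1} u * h u \<partial>lborel)"
      by (rule Bochner_Integration.integral_cong[OF refl]) (use d0 p in \<open>auto simp: indicator_def h'_def\<close>)
    then show ?thesis using lam_prod[OF p d, of h] d0 by simp
  qed
  show "(\<integral>u. indicator {0..1} u * (if (if d = 1 then u \<le> p else \<not> u \<le> p) then (1::real) else 0) \<partial>lborel)
      = (if d = 1 then p else 1 - p)"
  proof (cases "d = 1")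
    case True
    have "(\<integral>u. indicator {0..1} u * (if (if d = 1 then u \<le> p else \<not> u \<le> p) then (1::real) else 0) \<partial>lborel)
        = (\<integral>u. indicator {0..p} u \<partial>lborel)"
      by (rule Bochner_Integration.integral_cong[OF refl]) (use True p in \<open>auto simp: indicator_def\<close>)
    then show ?thesis using True p by simp
  next
    case False
    have "(\<integral>u. indicator {0..1} u * (if (if d = 1 then u \<le> p else \<not> u \<le> p) then (1::real) else 0) \<partial>lborel)
        = (\<integral>u. indicator {p<..1} u \<partial>lborel)"
      by (rule Bochner_Integration.integral_cong[OF refl]) (use False p in \<open>auto simp: indicator_def\<close>)
    then show ?thesis using False p by simp
  qed
qed

lemma sel_integral:
  fixes K P U :: "'o \<Rightarrow> real" and h :: "real \<Rightarrow> real"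
  assumes prob: "prob_space M" and sub: "subalgebra M F" and Um[measurable]: "U \<in> borel_measurable M"
    and H: "\<And>G B. G \<in> sets F \<Longrightarrow> B \<in> sets borel \<Longrightarrow>
       measure M (G \<inter> (U -` B \<inter> space M)) = measure M G * measure lborel (B \<inter> {0..1})"
    and PF[measurable]: "P \<in> borel_measurable F" and KF[measurable]: "K \<in> borel_measurable F"
    and Prange: "AE \<omega> in M. 0 < P \<omega> \<and> P \<omega> < 1"
    and hcont: "continuous_on {0<..<1} h"
    and d: "d = 0 \<or> d = 1"
    and int1: "integrable M (\<lambda>\<omega>. indicator {\<omega> \<in> space M. (if d = 1 then U \<omega> \<le> P \<omega> else \<not> U \<omega> \<le> P \<omega>)} \<omega> * (K \<omega> * (indicator {0<..<1} (U \<omega>) * h (U \<omega>))))"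
    and int2: "integrable M (\<lambda>\<omega>. indicator {\<omega> \<in> space M. (if d = 1 then U \<omega> \<le> P \<omega> else \<not> U \<omega> \<le> P \<omega>)} \<omega> * (K \<omega> * lam h d (P \<omega>)))"
  shows "(\<integral>\<omega>. indicator {\<omega> \<in> space M. (if d = 1 then U \<omega> \<le> P \<omega> else \<not> U \<omega> \<le> P \<omega>)} \<omega> * (K \<omega> * (indicator {0<..<1} (U \<omega>) * h (U \<omega>))) \<partial>M)
       = (\<integral>\<omega>. indicator {\<omega> \<in> space M. (if d = 1 then U \<omega> \<le> P \<omega> else \<not> U \<omega> \<le> P \<omega>)} \<omega> * (K \<omega> * lam h d (P \<omega>)) \<partial>M)"
proof -
  interpret prob_space M by (rule prob)
  let ?R = "restr_to_subalg M F"
  let ?S = "{\<omega> \<in> space M. (if d = 1 then U \<omega> \<le> P \<omega> else \<not> U \<omega> \<le> P \<omega>)}"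
  define sel where "sel u p = (if d = 1 then u \<le> p else \<not> u \<le> p)" for u p :: real
  define h' where "h' u = indicator {0<..<1} u * h u" for u
  have h'm[measurable]: "h' \<in> borel_measurable borel"
    unfolding h'_def[abs_def] using borel_measurable_continuous_on_indicator[OF _ hcont] by simp
  have PR[measurable]: "P \<in> borel_measurable ?R" by (rule measurable_in_subalg[OF sub PF])
  have KR[measurable]: "K \<in> borel_measurable ?R" by (rule measurable_in_subalg[OF sub KF])
  have PM[measurable]: "P \<in> borel_measurable M" by (rule measurable_from_subalg[OF sub PF])
  have KM[measurable]: "K \<in> borel_measurable M" by (rule measurable_from_subalg[OF sub KF])
  have Sm[measurable]: "?S \<in> sets M" by measurable
  have int1': "integrable M (\<lambda>\<omega>. indicator ?S \<omega> * (K \<omega> * h' (U \<omega>)))"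
    using int1 unfolding h'_def .
  define \<phi>1 where "\<phi>1 = (\<lambda>(\<omega>, u). (if sel u (P \<omega>) then (1::real) else 0) * (K \<omega> * h' u))"
  define \<phi>2 where "\<phi>2 = (\<lambda>(\<omega>, u). (if sel u (P \<omega>) then (1::real) else 0) * (K \<omega> * lam h d (P \<omega>)))"
  have sndm0: "snd \<in> measurable (?R \<Otimes>\<^sub>M unif) unif" by (rule measurable_snd)
  have sndm[measurable]: "snd \<in> borel_measurable (?R \<Otimes>\<^sub>M unif)"
    using sndm0 by (simp only: measurable_cong_sets[OF refl sets_unif])
  have Pf[measurable]: "(\<lambda>x. P (fst x)) \<in> borel_measurable (?R \<Otimes>\<^sub>M unif)"
    by (rule measurable_compose[OF measurable_fst PR])
  have Kf[measurable]: "(\<lambda>x. K (fst x)) \<in> borel_measurable (?R \<Otimes>\<^sub>M unif)"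
    by (rule measurable_compose[OF measurable_fst KR])
  have h's[measurable]: "(\<lambda>x. h' (snd x)) \<in> borel_measurable (?R \<Otimes>\<^sub>M unif)"
    by (rule measurable_compose[OF sndm h'm])
  have lf[measurable]: "(\<lambda>x. lam h d (P (fst x))) \<in> borel_measurable (?R \<Otimes>\<^sub>M unif)"
    by (rule lam_meas[OF Pf])
  have selm[measurable]: "(\<lambda>x. if sel (snd x) (P (fst x)) then (1::real) else 0) \<in> borel_measurable (?R \<Otimes>\<^sub>M unif)"
  proof (cases "d = 1")
    case True
    then have "(\<lambda>x. if sel (snd x) (P (fst x)) then (1::real) else 0) = (\<lambda>x. if snd x \<le> P (fst x) then 1 else 0)"
      by (simp add: sel_def)
    also have "\<dots> \<in> borel_measurable (?R \<Otimes>\<^sub>M unif)" by measurable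
    finally show ?thesis .
  next
    case False
    then have "(\<lambda>x. if sel (snd x) (P (fst x)) then (1::real) else 0) = (\<lambda>x. if snd x \<le> P (fst x) then 0 else 1)"
      by (simp add: sel_def fun_eq_iff)
    also have "\<dots> \<in> borel_measurable (?R \<Otimes>\<^sub>M unif)" by measurable
    finally show ?thesis .
  qed
  have \<phi>1m: "\<phi>1 \<in> borel_measurable (?R \<Otimes>\<^sub>M unif)"
  proof -
    have "\<phi>1 = (\<lambda>x. (if sel (snd x) (P (fst x)) then (1::real) else 0) * (K (fst x) * h' (snd x)))"
      by (simp add: \<phi>1_def split_beta')
    also have "\<dots> \<in> borel_measurable (?R \<Otimes>\<^sub>M unif)" by measurable
    finally show ?thesis .
  qed
  have \<phi>2m: "\<phi>2 \<in> borel_measurable (?R \<Otimes>\<^sub>M unif)"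
  proof -
    have "\<phi>2 = (\<lambda>x. (if sel (snd x) (P (fst x)) then (1::real) else 0) * (K (fst x) * lam h d (P (fst x))))"
      by (simp add: \<phi>2_def split_beta')
    also have "\<dots> \<in> borel_measurable (?R \<Otimes>\<^sub>M unif)" by measurable
    finally show ?thesis .
  qed
  have e1: "indicator ?S \<omega> * (K \<omega> * h' (U \<omega>)) = \<phi>1 (\<omega>, U \<omega>)" if "\<omega> \<in> space M" for \<omega>
    using that by (simp add: \<phi>1_def sel_def indicator_def)
  have e2: "indicator ?S \<omega> * (K \<omega> * lam h d (P \<omega>)) = \<phi>2 (\<omega>, U \<omega>)" if "\<omega> \<in> space M" for \<omega>
    using that by (simp add: \<phi>2_def sel_def indicator_def)
  have "integrable M (\<lambda>\<omega>. \<phi>1 (\<omega>, U \<omega>)) \<longleftrightarrow> integrable M (\<lambda>\<omega>. indicator ?S \<omega> * (K \<omega> * h' (U \<omega>)))"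
    by (rule Bochner_Integration.integrable_cong[OF refl], rule sym, erule e1)
  then have i1: "integrable M (\<lambda>\<omega>. \<phi>1 (\<omega>, U \<omega>))" using int1' by simp
  have "integrable M (\<lambda>\<omega>. \<phi>2 (\<omega>, U \<omega>)) \<longleftrightarrow> integrable M (\<lambda>\<omega>. indicator ?S \<omega> * (K \<omega> * lam h d (P \<omega>)))"
    by (rule Bochner_Integration.integrable_cong[OF refl], rule sym, erule e2)
  then have i2: "integrable M (\<lambda>\<omega>. \<phi>2 (\<omega>, U \<omega>))" using int2 by simp
  note F1 = fubini_unif[OF prob sub Um H \<phi>1m i1]
  note F2 = fubini_unif[OF prob sub Um H \<phi>2m i2]
  have inner: "AE \<omega> in M. (\<integral>u. \<phi>1 (\<omega>, u) \<partial>unif) = (\<integral>u. \<phi>2 (\<omega>, u) \<partial>unif)"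
    using Prange
  proof eventually_elim
    case (elim \<omega>)
    then have p: "0 < P \<omega>" "P \<omega> < 1" by auto
    have "(\<integral>u. \<phi>1 (\<omega>, u) \<partial>unif) = (\<integral>u. indicator {0..1} u * \<phi>1 (\<omega>, u) \<partial>lborel)"
      by (rule integral_unif) (simp add: \<phi>1_def sel_def)
    also have "\<dots> = (\<integral>u. K \<omega> * (indicator {0..1} u * ((if (if d = 1 then u \<le> P \<omega> else \<not> u \<le> P \<omega>) then (1::real) else 0) * h' u)) \<partial>lborel)"
      by (rule Bochner_Integration.integral_cong[OF refl]) (simp add: \<phi>1_def sel_def)
    also have "\<dots> = K \<omega> * ((if d = 1 then P \<omega> else 1 - P \<omega>) * lam h d (P \<omega>))"
      using sel_inner(1)[OF hcont p d] unfolding h'_def by simp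
    also have "\<dots> = (K \<omega> * lam h d (P \<omega>)) * (\<integral>u. indicator {0..1} u * (if (if d = 1 then u \<le> P \<omega> else \<not> u \<le> P \<omega>) then (1::real) else 0) \<partial>lborel)"
      using sel_inner(2)[OF hcont p d] by simp
    also have "\<dots> = (\<integral>u. indicator {0..1} u * \<phi>2 (\<omega>, u) \<partial>lborel)"
      by (simp add: \<phi>2_def sel_def ac_simps)
    also have "\<dots> = (\<integral>u. \<phi>2 (\<omega>, u) \<partial>unif)"
      by (rule integral_unif[symmetric]) (simp add: \<phi>2_def sel_def)
    finally show ?case .
  qed
  have "(\<integral>\<omega>. indicator ?S \<omega> * (K \<omega> * (indicator {0<..<1} (U \<omega>) * h (U \<omega>))) \<partial>M) = (\<integral>\<omega>. \<phi>1 (\<omega>, U \<omega>) \<partial>M)"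
    unfolding h'_def[symmetric] by (rule Bochner_Integration.integral_cong[OF refl], erule e1)
  also have "\<dots> = (\<integral>\<omega>. (\<integral>u. \<phi>1 (\<omega>, u) \<partial>unif) \<partial>M)" by (rule F1(1))
  also have "\<dots> = (\<integral>\<omega>. (\<integral>u. \<phi>2 (\<omega>, u) \<partial>unif) \<partial>M)"
    by (rule integral_cong_AE[OF _ _ inner])
       (auto intro: measurable_from_subalg[OF sub F1(2)] measurable_from_subalg[OF sub F2(2)])
  also have "\<dots> = (\<integral>\<omega>. \<phi>2 (\<omega>, U \<omega>) \<partial>M)" by (rule F2(1)[symmetric])
  also have "\<dots> = (\<integral>\<omega>. indicator ?S \<omega> * (K \<omega> * lam h d (P \<omega>)) \<partial>M)"
    by (rule Bochner_Integration.integral_cong[OF refl], rule sym, erule e2)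
  finally show ?thesis .
qed


lemma AEU_lemma:
  fixes U :: "'o \<Rightarrow> real"
  assumes prob: "prob_space M" and sub: "subalgebra M F" and Um[measurable]: "U \<in> borel_measurable M"
    and H: "\<And>G B. G \<in> sets F \<Longrightarrow> B \<in> sets borel \<Longrightarrow>
       measure M (G \<inter> (U -` B \<inter> space M)) = measure M G * measure lborel (B \<inter> {0..1})"
  shows "AE \<omega> in M. 0 < U \<omega> \<and> U \<omega> < 1"
proof -
  interpret prob_space M by (rule prob)
  show ?thesis
  proof (rule AE_I')
    have topF: "space M \<in> sets F" using sub sets.top[of F] unfolding subalgebra_def by simp
    have "measure M (space M \<inter> (U -` (- {0<..<1}) \<inter> space M)) = measure M (space M) * measure lborel (- {0<..<1} \<inter> {0..1::real})"
      by (rule H[OF topF]) simp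
    also have "- {0<..<1} \<inter> {0..1::real} = {0, 1}" by auto
    also have "measure lborel {0, 1::real} = 0"
      by (simp add: measure_def emeasure_lborel_countable)
    finally have "measure M (U -` (- {0<..<1}) \<inter> space M) = 0" by (simp add: Int_absorb1)
    moreover have "U -` (- {0<..<1}) \<inter> space M \<in> sets M" by measurable
    ultimately show "U -` (- {0<..<1}) \<inter> space M \<in> null_sets M"
      by (auto simp: emeasure_eq_measure null_sets_def)
    show "{\<omega> \<in> space M. \<not> (0 < U \<omega> \<and> U \<omega> < 1)} \<subseteq> U -` (- {0<..<1}) \<inter> space M" by auto
  qed
qed


lemma sum_reg_idx:
  fixes f :: "'L::finite reg_idx \<Rightarrow> 'a::comm_monoid_add"
  shows "(\<Sum>i\<in>UNIV. f i) = f RConst + f RLam + (\<Sum>k\<in>UNIV. f (RCov k))"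
proof -
  have "(\<Sum>i\<in>UNIV. f i) = (\<Sum>i\<in>insert RConst (insert RLam (range RCov)). f i)"
    by (simp only: UNIV_reg_idx)
  also have "\<dots> = f RConst + (f RLam + (\<Sum>i\<in>range RCov. f i))"
    by (simp add: image_iff)
  also have "(\<Sum>i\<in>range RCov. f i) = (\<Sum>k\<in>UNIV. f (RCov k))"
    by (rule sum.reindex[unfolded comp_def]) (simp add: inj_def)
  finally show ?thesis by (simp add: add.assoc)
qed

lemma matrix_inv_cancel:
  fixes A :: "'a::field^'n^'n"
  assumes "invertible A"
  shows "matrix_inv A *v (A *v x) = x"
proof -
  have "\<exists>A'. A ** A' = mat 1 \<and> A' ** A = mat 1" using assms unfolding invertible_def .
  then have "A ** matrix_inv A = mat 1 \<and> matrix_inv A ** A = mat 1"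
    unfolding matrix_inv_def by (rule someI_ex)
  then show ?thesis by (simp add: matrix_vector_mul_assoc)
qed

lemma inner_sum_vec: "(x::real^'L::finite) \<bullet> y = (\<Sum>k\<in>UNIV. x $ k * y $ k)"
  by (simp add: inner_vec_def)

lemma ls_solve:
  fixes A :: "real^('L::finite reg_idx)^('L reg_idx)" and b :: "real^('L reg_idx)"
    and m tau eta :: "real^'L" and Sww :: "'L \<Rightarrow> 'L \<Rightarrow> real"
  assumes A00: "A $ RConst $ RConst = 1" and A0k: "\<And>k. A $ RConst $ RCov k = m $ k"
    and Ak0: "\<And>k. A $ RCov k $ RConst = m $ k" and A0L: "A $ RConst $ RLam = l"
    and AL0: "A $ RLam $ RConst = l" and Ajk: "\<And>j k. A $ RCov j $ RCov k = Sww j k"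
    and AjL: "\<And>j. A $ RCov j $ RLam = m $ j * l" and ALj: "\<And>j. A $ RLam $ RCov j = m $ j * l"
    and ALL: "A $ RLam $ RLam = Sll"
    and covinv: "invertible (\<chi> j k. Sww j k - m $ j * m $ k)"
    and varl: "Sll - l * l \<noteq> 0"
    and b0: "b $ RConst = mu + m \<bullet> tau + rho * l + (m \<bullet> eta) * l"
    and bj: "\<And>j. b $ RCov j = mu * m $ j + (\<Sum>k\<in>UNIV. Sww j k * tau $ k) + rho * (m $ j * l) + (\<Sum>k\<in>UNIV. Sww j k * eta $ k) * l"
    and bL: "b $ RLam = mu * l + (m \<bullet> tau) * l + rho * Sll + (m \<bullet> eta) * Sll"
  shows "matrix_inv A *v b = (\<chi> i. case i of RConst \<Rightarrow> mu - (m \<bullet> eta) * l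
                                   | RCov k \<Rightarrow> tau $ k + l * eta $ k | RLam \<Rightarrow> rho + m \<bullet> eta)"
proof -
  define \<beta> :: "real^('L reg_idx)" where "\<beta> = (\<chi> i. case i of RConst \<Rightarrow> mu - (m \<bullet> eta) * l
                                   | RCov k \<Rightarrow> tau $ k + l * eta $ k | RLam \<Rightarrow> rho + m \<bullet> eta)"
  have Ab: "A *v \<beta> = b"
  proof (subst vec_eq_iff, rule allI)
    fix i show "(A *v \<beta>) $ i = b $ i"
    proof (cases i)
      case RConst
      have "(A *v \<beta>) $ i = (mu - (m \<bullet> eta) * l) + l * (rho + m \<bullet> eta) + (\<Sum>k\<in>UNIV. m $ k * (tau $ k + l * eta $ k))"
        unfolding matrix_vector_mult_def RConst by (simp add: sum_reg_idx \<beta>_def A00 A0k A0L)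
      also have "\<dots> = b $ i"
        unfolding RConst b0 inner_sum_vec by (simp add: algebra_simps sum.distrib sum_distrib_left)
      finally show ?thesis .
    next
      case (RCov j)
      have "(A *v \<beta>) $ i = m $ j * (mu - (m \<bullet> eta) * l) + m $ j * l * (rho + m \<bullet> eta) + (\<Sum>k\<in>UNIV. Sww j k * (tau $ k + l * eta $ k))"
        unfolding matrix_vector_mult_def RCov by (simp add: sum_reg_idx \<beta>_def Ak0 Ajk AjL)
      also have "\<dots> = b $ i"
        unfolding RCov bj inner_sum_vec by (simp add: algebra_simps sum.distrib sum_distrib_left sum_distrib_right)
      finally show ?thesis .
    next
      case RLam
      have "(A *v \<beta>) $ i = l * (mu - (m \<bullet> eta) * l) + Sll * (rho + m \<bullet> eta) + (\<Sum>k\<in>UNIV. m $ k * l * (tau $ k + l * eta $ k))"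
        unfolding matrix_vector_mult_def RLam by (simp add: sum_reg_idx \<beta>_def AL0 ALj ALL)
      also have "\<dots> = b $ i"
        unfolding RLam bL inner_sum_vec by (simp add: algebra_simps sum.distrib sum_distrib_left sum_distrib_right)
      finally show ?thesis .
    qed
  qed
  have inv: "invertible A"
  proof -
    have "\<forall>x. A *v x = 0 \<longrightarrow> x = 0"
    proof (intro allI impI)
      fix x assume Ax: "A *v x = 0"
      define xw :: "real^'L" where "xw = (\<chi> k. x $ RCov k)"
      have r0: "x $ RConst + l * x $ RLam + (\<Sum>k\<in>UNIV. m $ k * xw $ k) = 0"
        using arg_cong[OF Ax, of "\<lambda>v. v $ RConst"]
        unfolding matrix_vector_mult_def by (simp add: sum_reg_idx xw_def A00 A0k A0L)
      have rj: "m $ j * x $ RConst + m $ j * l * x $ RLam + (\<Sum>k\<in>UNIV. Sww j k * xw $ k) = 0" for j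
        using arg_cong[OF Ax, of "\<lambda>v. v $ RCov j"]
        unfolding matrix_vector_mult_def by (simp add: sum_reg_idx xw_def Ak0 Ajk AjL)
      have rL: "l * x $ RConst + Sll * x $ RLam + (\<Sum>k\<in>UNIV. m $ k * l * xw $ k) = 0"
        using arg_cong[OF Ax, of "\<lambda>v. v $ RLam"]
        unfolding matrix_vector_mult_def by (simp add: sum_reg_idx xw_def AL0 ALj ALL)
      have "(\<chi> j k. Sww j k - m $ j * m $ k) *v xw = 0"
      proof (subst vec_eq_iff, rule allI)
        fix j
        have "((\<chi> j k. Sww j k - m $ j * m $ k) *v xw) $ j
            = (\<Sum>k\<in>UNIV. Sww j k * xw $ k) - m $ j * (\<Sum>k\<in>UNIV. m $ k * xw $ k)"
          unfolding matrix_vector_mult_def by (simp add: algebra_simps sum_subtractf sum_distrib_left)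
        moreover have "(\<Sum>k\<in>UNIV. Sww j k * xw $ k) = -(m $ j * x $ RConst + m $ j * l * x $ RLam)"
          using rj[of j] by linarith
        moreover have "(\<Sum>k\<in>UNIV. m $ k * xw $ k) = -(x $ RConst + l * x $ RLam)"
          using r0 by linarith
        ultimately show "((\<chi> j k. Sww j k - m $ j * m $ k) *v xw) $ j = 0 $ j"
          by (simp add: algebra_simps)
      qed
      then have xw0: "xw = 0"
      proof -
        assume h0: "(\<chi> j k. Sww j k - m $ j * m $ k) *v xw = 0"
        have "(\<chi> j k. Sww j k - m $ j * m $ k) *v xw = (\<chi> j k. Sww j k - m $ j * m $ k) *v 0"
          using h0 by simp
        then show ?thesis using injD[OF inj_matrix_vector_mult[OF covinv]] by blast
      qed
      have xk: "x $ RCov k = 0" for k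
      proof -
        have "xw $ k = 0" using xw0 by simp
        then show ?thesis unfolding xw_def by simp
      qed
      have s0: "(\<Sum>k\<in>UNIV. m $ k * xw $ k) = 0" "(\<Sum>k\<in>UNIV. m $ k * l * xw $ k) = 0" using xw0 by simp_all
      have e0: "x $ RConst = - l * x $ RLam" using r0 s0 by simp
      have "(Sll - l * l) * x $ RLam = 0" using rL s0 e0 by (simp add: algebra_simps)
      then have xL: "x $ RLam = 0" using varl by simp
      then have x0: "x $ RConst = 0" using e0 by simp
      show "x = 0"
      proof (subst vec_eq_iff, rule allI)
        fix i show "x $ i = 0 $ i" by (cases i) (simp_all add: xL x0 xk)
      qed
    qed
    then show ?thesis
      unfolding invertible_left_inverse matrix_left_invertible_ker[symmetric] .
  qed
  show ?thesis using matrix_inv_cancel[OF inv, of \<beta>] Ab unfolding \<beta>_def by simp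
qed


lemma abs_mult_le_sq: "\<bar>a * b\<bar> \<le> a\<^sup>2 + (b::real)\<^sup>2"
proof (cases "\<bar>a\<bar> \<le> \<bar>b\<bar>")
  case True
  have "\<bar>a * b\<bar> = \<bar>a\<bar> * \<bar>b\<bar>" by (simp add: abs_mult)
  also have "\<dots> \<le> \<bar>b\<bar> * \<bar>b\<bar>" using True by (intro mult_right_mono) auto
  also have "\<dots> = b\<^sup>2" by (simp add: power2_eq_square abs_mult_self_eq)
  finally show ?thesis by (simp add: add_increasing)
next
  case False
  have "\<bar>a * b\<bar> = \<bar>a\<bar> * \<bar>b\<bar>" by (simp add: abs_mult)
  also have "\<dots> \<le> \<bar>a\<bar> * \<bar>a\<bar>" using False by (intro mult_left_mono) auto
  also have "\<dots> = a\<^sup>2" by (simp add: power2_eq_square abs_mult_self_eq)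
  finally show ?thesis by (simp add: add_increasing2)
qed

lemma L2_prod:
  fixes f g :: "'a \<Rightarrow> real"
  assumes [measurable]: "f \<in> borel_measurable M" "g \<in> borel_measurable M"
    and "integrable M (\<lambda>x. (f x)\<^sup>2)" "integrable M (\<lambda>x. (g x)\<^sup>2)"
  shows "integrable M (\<lambda>x. f x * g x)"
proof (rule Bochner_Integration.integrable_bound[of _ "\<lambda>x. (f x)\<^sup>2 + (g x)\<^sup>2"])
  show "integrable M (\<lambda>x. (f x)\<^sup>2 + (g x)\<^sup>2)" by (rule Bochner_Integration.integrable_add) fact+
  show "(\<lambda>x. f x * g x) \<in> borel_measurable M" by measurable
  show "AE x in M. norm (f x * g x) \<le> norm ((f x)\<^sup>2 + (g x)\<^sup>2)"
    using abs_mult_le_sq by (intro AE_I2) simp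
qed

lemma int_eq:
  fixes f g :: "'a \<Rightarrow> real"
  shows "integrable M f \<Longrightarrow> (\<And>x. x \<in> space M \<Longrightarrow> f x = g x) \<Longrightarrow> integrable M g"
  using Bochner_Integration.integrable_cong[OF refl, of M f g] by simp

lemma cexp_cong:
  "(\<And>\<omega>. \<omega> \<in> A \<Longrightarrow> f \<omega> = g \<omega>) \<Longrightarrow> cexp M A f = cexp M A g"
  unfolding cexp_def by (rule arg_cong2[where f="(/)"], rule Bochner_Integration.integral_cong[OF refl])
    (auto simp: indicator_def)

lemma cexp_expand:
  fixes G L :: "'o \<Rightarrow> real" and W :: "'o \<Rightarrow> real^'L::finite"
  assumes i1: "integrable M (\<lambda>\<omega>. indicator A \<omega> * G \<omega>)"
    and i2: "\<And>k. integrable M (\<lambda>\<omega>. indicator A \<omega> * (G \<omega> * W \<omega> $ k))"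
    and i3: "integrable M (\<lambda>\<omega>. indicator A \<omega> * (G \<omega> * L \<omega>))"
    and i4: "\<And>k. integrable M (\<lambda>\<omega>. indicator A \<omega> * (G \<omega> * W \<omega> $ k * L \<omega>))"
  shows "cexp M A (\<lambda>\<omega>. G \<omega> * (mu + W \<omega> \<bullet> tau + (rho + W \<omega> \<bullet> eta) * L \<omega>)) =
     mu * cexp M A G + (\<Sum>k\<in>UNIV. tau $ k * cexp M A (\<lambda>\<omega>. G \<omega> * W \<omega> $ k))
     + rho * cexp M A (\<lambda>\<omega>. G \<omega> * L \<omega>) + (\<Sum>k\<in>UNIV. eta $ k * cexp M A (\<lambda>\<omega>. G \<omega> * W \<omega> $ k * L \<omega>))"
proof -
  have pw: "(\<lambda>\<omega>. indicator A \<omega> * (G \<omega> * (mu + W \<omega> \<bullet> tau + (rho + W \<omega> \<bullet> eta) * L \<omega>))) =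
      (\<lambda>\<omega>. (mu * (indicator A \<omega> * G \<omega>) + (\<Sum>k\<in>UNIV. tau $ k * (indicator A \<omega> * (G \<omega> * W \<omega> $ k))))
       + (rho * (indicator A \<omega> * (G \<omega> * L \<omega>)) + (\<Sum>k\<in>UNIV. eta $ k * (indicator A \<omega> * (G \<omega> * W \<omega> $ k * L \<omega>)))))"
    by (rule ext) (simp add: inner_sum_vec algebra_simps sum_distrib_left sum_distrib_right)
  have j1: "integrable M (\<lambda>\<omega>. mu * (indicator A \<omega> * G \<omega>) + (\<Sum>k\<in>UNIV. tau $ k * (indicator A \<omega> * (G \<omega> * W \<omega> $ k))))"
    using i1 i2 by (intro Bochner_Integration.integrable_add Bochner_Integration.integrable_mult_right Bochner_Integration.integrable_sum) auto
  have j2: "integrable M (\<lambda>\<omega>. rho * (indicator A \<omega> * (G \<omega> * L \<omega>)) + (\<Sum>k\<in>UNIV. eta $ k * (indicator A \<omega> * (G \<omega> * W \<omega> $ k * L \<omega>))))"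
    using i3 i4 by (intro Bochner_Integration.integrable_add Bochner_Integration.integrable_mult_right Bochner_Integration.integrable_sum) auto
  have "(\<integral>\<omega>. indicator A \<omega> * (G \<omega> * (mu + W \<omega> \<bullet> tau + (rho + W \<omega> \<bullet> eta) * L \<omega>)) \<partial>M)
     = mu * (\<integral>\<omega>. indicator A \<omega> * G \<omega> \<partial>M) + (\<Sum>k\<in>UNIV. tau $ k * (\<integral>\<omega>. indicator A \<omega> * (G \<omega> * W \<omega> $ k) \<partial>M))
     + (rho * (\<integral>\<omega>. indicator A \<omega> * (G \<omega> * L \<omega>) \<partial>M) + (\<Sum>k\<in>UNIV. eta $ k * (\<integral>\<omega>. indicator A \<omega> * (G \<omega> * W \<omega> $ k * L \<omega>) \<partial>M)))"
    unfolding pw Bochner_Integration.integral_add[OF j1 j2]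
    using i1 i2 i3 i4
    by (subst Bochner_Integration.integral_add Bochner_Integration.integral_sum, (intro Bochner_Integration.integrable_mult_right Bochner_Integration.integrable_sum; auto)+, simp)+
  then show ?thesis
    unfolding cexp_def by (simp add: add_divide_distrib sum_divide_distrib)
qed


lemma coef_formula:
  fixes M :: "'o measure" and Mz :: "'z measure"
    and Y :: "nat \<Rightarrow> 'o \<Rightarrow> real" and Yobs D U P :: "'o \<Rightarrow> real"
    and Z :: "'o \<Rightarrow> 'z" and W :: "'o \<Rightarrow> real^'L"
    and h :: "real \<Rightarrow> real"
    and mu rho :: "nat \<Rightarrow> real" and tau eta :: "nat \<Rightarrow> real^'L"
  defines "Ev \<equiv> \<lambda>d::nat. {\<omega> \<in> space M. D \<omega> = real d}"
  assumes prob: "prob_space M"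
    and Z_meas: "Z \<in> measurable M Mz" and W_meas: "W \<in> borel_measurable M"
    and U_meas: "U \<in> borel_measurable M"
    and Y_meas: "\<forall>d\<in>{0,1}. Y d \<in> borel_measurable M"
    and U_unif: "\<forall>B\<in>sets borel. AE \<omega> in M.
         real_cond_exp M (sigma_gen M borel W) (indicator (U -` B \<inter> space M)) \<omega>
         = measure lborel (B \<inter> {0..1})"
    and Z_U_indep: "cond_indep M (sigma_gen M borel W) Z Mz U borel"
    and P_meas: "P \<in> borel_measurable (sigma_gen M (Mz \<Otimes>\<^sub>M borel) (\<lambda>\<omega>. (Z \<omega>, W \<omega>)))"
    and P_def: "AE \<omega> in M. P \<omega> = real_cond_exp M (sigma_gen M (Mz \<Otimes>\<^sub>M borel) (\<lambda>\<omega>. (Z \<omega>, W \<omega>)))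
                     (indicator {\<omega> \<in> space M. D \<omega> = 1}) \<omega>"
    and P_range: "AE \<omega> in M. 0 < P \<omega> \<and> P \<omega> < 1"
    and D_def: "\<forall>\<omega>\<in>space M. D \<omega> = (if U \<omega> \<le> P \<omega> then 1 else 0)"
    and Yobs_def: "\<forall>\<omega>\<in>space M. Yobs \<omega> = (1 - D \<omega>) * Y 0 \<omega> + D \<omega> * Y 1 \<omega>"
    and Y_ZWU: "\<forall>d\<in>{0,1}. AE \<omega> in M.
         real_cond_exp M (sigma_gen M (Mz \<Otimes>\<^sub>M (borel \<Otimes>\<^sub>M borel)) (\<lambda>\<omega>. (Z \<omega>, W \<omega>, U \<omega>))) (Y d) \<omega>
         = mu d + W \<omega> \<bullet> tau d + (rho d + W \<omega> \<bullet> eta d) * h (U \<omega>)"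
    and Y_WU: "\<forall>d\<in>{0,1}. AE \<omega> in M.
         real_cond_exp M (sigma_gen M (borel \<Otimes>\<^sub>M borel) (\<lambda>\<omega>. (W \<omega>, U \<omega>))) (Y d) \<omega>
         = mu d + W \<omega> \<bullet> tau d + (rho d + W \<omega> \<bullet> eta d) * h (U \<omega>)"
    and h_mono: "strict_mono_on {0<..<1} h"
    and h_cont: "continuous_on {0<..<1} h"
    and h_int: "interval_lebesgue_integrable lborel 0 1 h"
    and h_zero: "(LBINT u=0..1. h u) = 0"
    and Y_int: "\<forall>d\<in>{0,1}. integrable M (Y d) \<and> integrable M (\<lambda>\<omega>. (Y d \<omega>)\<^sup>2)"
    and W_int: "\<forall>i. integrable M (\<lambda>\<omega>. (W \<omega> $ i)\<^sup>2)"
    and lam_int: "\<forall>d\<in>{0,1}. integrable M (\<lambda>\<omega>. indicator (Ev d) \<omega> * (lam h d (P \<omega>))\<^sup>2)"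
    and WWlam_int: "\<forall>d\<in>{0,1}. \<forall>i j. integrable M
          (\<lambda>\<omega>. indicator (Ev d) \<omega> * (W \<omega> $ i * W \<omega> $ j * lam h d (P \<omega>)))"
    and Wlam2_int: "\<forall>d\<in>{0,1}. \<forall>i. integrable M
          (\<lambda>\<omega>. indicator (Ev d) \<omega> * (W \<omega> $ i * (lam h d (P \<omega>))\<^sup>2))"
    and VarW_nonsing: "\<forall>d\<in>{0,1}.
          invertible (\<chi> i j. ccov M (Ev d) (\<lambda>\<omega>. W \<omega> $ i) (\<lambda>\<omega>. W \<omega> $ j))"
    and Varlam_pos: "\<forall>d\<in>{0,1}.
          ccov M (Ev d) (\<lambda>\<omega>. lam h d (P \<omega>)) (\<lambda>\<omega>. lam h d (P \<omega>)) > 0"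
    and PD: "0 < measure M (Ev 1) \<and> measure M (Ev 1) < 1"
    and cov1: "\<forall>d\<in>{0,1}. \<forall>i. ccov M (Ev d) (\<lambda>\<omega>. W \<omega> $ i) (\<lambda>\<omega>. lam h d (P \<omega>)) = 0"
    and cov2: "\<forall>d\<in>{0,1}. \<forall>i j.
          ccov M (Ev d) (\<lambda>\<omega>. W \<omega> $ i * W \<omega> $ j) (\<lambda>\<omega>. lam h d (P \<omega>)) = 0"
    and cov3: "\<forall>d\<in>{0,1}. \<forall>i.
          ccov M (Ev d) (\<lambda>\<omega>. W \<omega> $ i) (\<lambda>\<omega>. (lam h d (P \<omega>))\<^sup>2) = 0"
    and d01: "d = 0 \<or> d = 1"
  shows "ls_coef M (Ev d) W (\<lambda>\<omega>. lam h d (P \<omega>)) Yobs =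
    (\<chi> i. case i of RConst \<Rightarrow> mu d - (cvec M (Ev d) W \<bullet> eta d) * cexp M (Ev d) (\<lambda>\<omega>. lam h d (P \<omega>))
       | RCov k \<Rightarrow> tau d $ k + cexp M (Ev d) (\<lambda>\<omega>. lam h d (P \<omega>)) * eta d $ k
       | RLam \<Rightarrow> rho d + cvec M (Ev d) W \<bullet> eta d)"
proof -
  interpret prob_space M by (rule prob)
  note [measurable] = Z_meas W_meas U_meas
  have Ym[measurable]: "Y d \<in> borel_measurable M" using Y_meas d01 by auto
  let ?ZW = "\<lambda>\<omega>. (Z \<omega>, W \<omega>)"
  let ?ZWU = "\<lambda>\<omega>. (Z \<omega>, W \<omega>, U \<omega>)"
  let ?F = "sigma_gen M (Mz \<Otimes>\<^sub>M borel) ?ZW"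
  let ?F3 = "sigma_gen M (Mz \<Otimes>\<^sub>M (borel \<Otimes>\<^sub>M borel)) ?ZWU"
  have ZWm: "?ZW \<in> measurable M (Mz \<Otimes>\<^sub>M borel)" by measurable
  have ZWUm: "?ZWU \<in> measurable M (Mz \<Otimes>\<^sub>M (borel \<Otimes>\<^sub>M borel))" by measurable
  have subF: "subalgebra M ?F" by (rule subalg_sigma_gen[OF ZWm])
  have subF3: "subalgebra M ?F3" by (rule subalg_sigma_gen[OF ZWUm])
  interpret F3: finite_measure_subalgebra M ?F3 by (rule fms_sigma_gen[OF prob ZWUm])
  have ZWsp: "?ZW \<in> space M \<rightarrow> space (Mz \<Otimes>\<^sub>M borel)" using measurable_space[OF ZWm] by blast
  have ZWUsp: "?ZWU \<in> space M \<rightarrow> space (Mz \<Otimes>\<^sub>M (borel \<Otimes>\<^sub>M borel))" using measurable_space[OF ZWUm] by blast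
  have H: "measure M (G \<inter> (U -` B \<inter> space M)) = measure M G * measure lborel (B \<inter> {0..1})"
    if G: "G \<in> sets ?F" and B: "B \<in> sets borel" for G B
  proof -
    obtain S where S: "S \<in> sets (Mz \<Otimes>\<^sub>M borel)" "G = ?ZW -` S \<inter> space M"
      using G unfolding sigma_gen_def sets_vimage_algebra2[OF ZWsp] by blast
    show ?thesis using ZW_unif[OF prob Z_meas W_meas U_meas U_unif Z_U_indep S(1) B] S(2) by simp
  qed
  have ZWF: "?ZW \<in> measurable ?F (Mz \<Otimes>\<^sub>M borel)"
    unfolding sigma_gen_def by (rule measurable_vimage_algebra1[OF ZWsp])
  have WF[measurable]: "W \<in> borel_measurable ?F"
    using measurable_compose[OF ZWF measurable_snd] by simp
  have ZWUF3: "?ZWU \<in> measurable ?F3 (Mz \<Otimes>\<^sub>M (borel \<Otimes>\<^sub>M borel))"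
    unfolding sigma_gen_def by (rule measurable_vimage_algebra1[OF ZWUsp])
  have ZF3: "Z \<in> measurable ?F3 Mz"
    using measurable_compose[OF ZWUF3 measurable_fst] by simp
  have WUF3: "(\<lambda>\<omega>. (W \<omega>, U \<omega>)) \<in> measurable ?F3 (borel \<Otimes>\<^sub>M borel)"
    using measurable_compose[OF ZWUF3 measurable_snd] by simp
  have WF3: "W \<in> borel_measurable ?F3"
    using measurable_compose[OF WUF3 measurable_fst] by simp
  have UF3[measurable]: "U \<in> borel_measurable ?F3"
    using measurable_compose[OF WUF3 measurable_snd] by simp
  have ZW_F3: "?ZW \<in> measurable ?F3 (Mz \<Otimes>\<^sub>M borel)"
    by (rule measurable_Pair[OF ZF3 WF3])
  have idF3F: "(\<lambda>\<omega>. \<omega>) \<in> measurable ?F3 ?F"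
    unfolding sigma_gen_def
    by (rule measurable_vimage_algebra2) (use ZW_F3 in \<open>simp_all add: sigma_gen_def\<close>)
  have PF3[measurable]: "P \<in> borel_measurable ?F3"
    using measurable_compose[OF idF3F P_meas] by simp
  have PM[measurable]: "P \<in> borel_measurable M" by (rule measurable_from_subalg[OF subF P_meas])
  define L where "L = (\<lambda>\<omega>. lam h d (P \<omega>))"
  have LF[measurable]: "L \<in> borel_measurable ?F" unfolding L_def using P_meas by measurable
  have LM[measurable]: "L \<in> borel_measurable M" unfolding L_def by measurable
  define S where "S = {\<omega> \<in> space M. if d = 1 then U \<omega> \<le> P \<omega> else \<not> U \<omega> \<le> P \<omega>}"
  have EvS: "Ev d = S" using D_def d01 unfolding Ev_def S_def by (auto split: if_splits)
  have Sm[measurable]: "S \<in> sets M" unfolding S_def by measurable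
  have SF3: "S \<in> sets ?F3"
  proof -
    have "S = {\<omega> \<in> space ?F3. if d = 1 then U \<omega> \<le> P \<omega> else \<not> U \<omega> \<le> P \<omega>}"
      unfolding S_def by (simp add: sigma_gen_def)
    also have "\<dots> \<in> sets ?F3" by measurable
    finally show ?thesis .
  qed
  have AEU: "AE \<omega> in M. 0 < U \<omega> \<and> U \<omega> < 1" by (rule AEU_lemma[OF prob subF U_meas H])
  have YZWU: "AE \<omega> in M. real_cond_exp M ?F3 (Y d) \<omega> = mu d + W \<omega> \<bullet> tau d + (rho d + W \<omega> \<bullet> eta d) * h (U \<omega>)"
    using Y_ZWU d01 by auto
  have YobsS: "Yobs \<omega> = Y d \<omega>" if "\<omega> \<in> S" for \<omega>
  proof -
    have "\<omega> \<in> space M" "D \<omega> = real d" using that EvS unfolding Ev_def by auto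
    then show ?thesis using Yobs_def d01 by auto
  qed
  have hcm[measurable]: "(\<lambda>\<omega>. indicator {0<..<1} (U \<omega>) * h (U \<omega>)) \<in> borel_measurable M"
  proof -
    have "(\<lambda>u. indicator {0<..<1} u * h u) \<in> borel_measurable borel"
      using borel_measurable_continuous_on_indicator[OF _ h_cont] by simp
    from measurable_compose[OF U_meas this] show ?thesis .
  qed
  have key: "cexp M S (\<lambda>\<omega>. G \<omega> * Yobs \<omega>) = cexp M S (\<lambda>\<omega>. G \<omega> * (mu d + W \<omega> \<bullet> tau d + (rho d + W \<omega> \<bullet> eta d) * L \<omega>))"
    if GF[measurable]: "G \<in> borel_measurable ?F"
      and i1: "integrable M (\<lambda>\<omega>. indicator S \<omega> * G \<omega>)"
      and i2: "\<And>k. integrable M (\<lambda>\<omega>. indicator S \<omega> * (G \<omega> * W \<omega> $ k))"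
      and i3: "integrable M (\<lambda>\<omega>. indicator S \<omega> * (G \<omega> * L \<omega>))"
      and i4: "\<And>k. integrable M (\<lambda>\<omega>. indicator S \<omega> * (G \<omega> * W \<omega> $ k * L \<omega>))"
      and i5: "integrable M (\<lambda>\<omega>. (indicator S \<omega> * G \<omega>) * Y d \<omega>)"
    for G
  proof -
    have GM[measurable]: "G \<in> borel_measurable M" by (rule measurable_from_subalg[OF subF GF])
    have GF3: "G \<in> borel_measurable ?F3" using measurable_compose[OF idF3F GF] by simp
    define f where "f \<omega> = indicator S \<omega> * G \<omega>" for \<omega>
    have fF3: "f \<in> borel_measurable ?F3"
      unfolding f_def using borel_measurable_indicator[OF SF3] GF3 by (rule borel_measurable_times)
    have fM[measurable]: "f \<in> borel_measurable M" unfolding f_def by measurable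
    define K where "K \<omega> = G \<omega> * (rho d + W \<omega> \<bullet> eta d)" for \<omega>
    have KF[measurable]: "K \<in> borel_measurable ?F" unfolding K_def by measurable
    have KM[measurable]: "K \<in> borel_measurable M" by (rule measurable_from_subalg[OF subF KF])
    have i5': "integrable M (\<lambda>\<omega>. f \<omega> * Y d \<omega>)" using i5 unfolding f_def .
    have c1: "(\<integral>\<omega>. f \<omega> * Y d \<omega> \<partial>M) = (\<integral>\<omega>. f \<omega> * real_cond_exp M ?F3 (Y d) \<omega> \<partial>M)"
      by (rule F3.real_cond_exp_intg(2)[symmetric, OF i5' fF3 Ym])
    have c1i: "integrable M (\<lambda>\<omega>. f \<omega> * real_cond_exp M ?F3 (Y d) \<omega>)"
      by (rule F3.real_cond_exp_intg(1)[OF i5' fF3 Ym])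
    have AEc: "AE \<omega> in M. f \<omega> * real_cond_exp M ?F3 (Y d) \<omega>
        = f \<omega> * (mu d + W \<omega> \<bullet> tau d) + indicator S \<omega> * (K \<omega> * (indicator {0<..<1} (U \<omega>) * h (U \<omega>)))"
      using YZWU AEU by eventually_elim (simp add: f_def K_def algebra_simps)
    have iT: "integrable M (\<lambda>\<omega>. f \<omega> * (mu d + W \<omega> \<bullet> tau d))"
    proof (rule int_eq)
      show "integrable M (\<lambda>\<omega>. mu d * (indicator S \<omega> * G \<omega>) + (\<Sum>k\<in>UNIV. tau d $ k * (indicator S \<omega> * (G \<omega> * W \<omega> $ k))))"
        using i1 i2 by (intro Bochner_Integration.integrable_add Bochner_Integration.integrable_mult_right Bochner_Integration.integrable_sum) auto
      show "mu d * (indicator S \<omega> * G \<omega>) + (\<Sum>k\<in>UNIV. tau d $ k * (indicator S \<omega> * (G \<omega> * W \<omega> $ k))) = f \<omega> * (mu d + W \<omega> \<bullet> tau d)" for \<omega>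
        by (simp add: f_def inner_sum_vec algebra_simps sum_distrib_left)
    qed
    have iH: "integrable M (\<lambda>\<omega>. indicator S \<omega> * (K \<omega> * (indicator {0<..<1} (U \<omega>) * h (U \<omega>))))"
    proof (rule integrable_cong_AE_imp[OF Bochner_Integration.integrable_diff[OF c1i iT]])
      show "(\<lambda>\<omega>. indicator S \<omega> * (K \<omega> * (indicator {0<..<1} (U \<omega>) * h (U \<omega>)))) \<in> borel_measurable M"
        using hcm by measurable
      show "AE \<omega> in M. f \<omega> * real_cond_exp M ?F3 (Y d) \<omega> - f \<omega> * (mu d + W \<omega> \<bullet> tau d)
          = indicator S \<omega> * (K \<omega> * (indicator {0<..<1} (U \<omega>) * h (U \<omega>)))"
        using AEc by eventually_elim simp
    qed
    have iL: "integrable M (\<lambda>\<omega>. indicator S \<omega> * (K \<omega> * L \<omega>))"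
    proof (rule int_eq)
      show "integrable M (\<lambda>\<omega>. rho d * (indicator S \<omega> * (G \<omega> * L \<omega>)) + (\<Sum>k\<in>UNIV. eta d $ k * (indicator S \<omega> * (G \<omega> * W \<omega> $ k * L \<omega>))))"
        using i3 i4 by (intro Bochner_Integration.integrable_add Bochner_Integration.integrable_mult_right Bochner_Integration.integrable_sum) auto
      show "rho d * (indicator S \<omega> * (G \<omega> * L \<omega>)) + (\<Sum>k\<in>UNIV. eta d $ k * (indicator S \<omega> * (G \<omega> * W \<omega> $ k * L \<omega>))) = indicator S \<omega> * (K \<omega> * L \<omega>)" for \<omega>
        by (simp add: K_def inner_sum_vec algebra_simps sum_distrib_left sum_distrib_right)
    qed
    have sel: "(\<integral>\<omega>. indicator S \<omega> * (K \<omega> * (indicator {0<..<1} (U \<omega>) * h (U \<omega>))) \<partial>M)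
        = (\<integral>\<omega>. indicator S \<omega> * (K \<omega> * L \<omega>) \<partial>M)"
      using sel_integral[OF prob subF U_meas H P_meas KF P_range h_cont d01] iH iL
      unfolding S_def L_def by blast
    have "(\<integral>\<omega>. indicator S \<omega> * (G \<omega> * Yobs \<omega>) \<partial>M) = (\<integral>\<omega>. f \<omega> * Y d \<omega> \<partial>M)"
      by (rule Bochner_Integration.integral_cong[OF refl]) (auto simp: f_def YobsS indicator_def)
    also have "\<dots> = (\<integral>\<omega>. f \<omega> * real_cond_exp M ?F3 (Y d) \<omega> \<partial>M)" by (rule c1)
    also have "\<dots> = (\<integral>\<omega>. f \<omega> * (mu d + W \<omega> \<bullet> tau d) + indicator S \<omega> * (K \<omega> * (indicator {0<..<1} (U \<omega>) * h (U \<omega>))) \<partial>M)"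
      by (rule integral_cong_AE[OF _ _ AEc]) (use c1i iT iH in auto)
    also have "\<dots> = (\<integral>\<omega>. f \<omega> * (mu d + W \<omega> \<bullet> tau d) \<partial>M) + (\<integral>\<omega>. indicator S \<omega> * (K \<omega> * (indicator {0<..<1} (U \<omega>) * h (U \<omega>))) \<partial>M)"
      by (rule Bochner_Integration.integral_add[OF iT iH])
    also have "\<dots> = (\<integral>\<omega>. f \<omega> * (mu d + W \<omega> \<bullet> tau d) \<partial>M) + (\<integral>\<omega>. indicator S \<omega> * (K \<omega> * L \<omega>) \<partial>M)"
      by (simp only: sel)
    also have "\<dots> = (\<integral>\<omega>. f \<omega> * (mu d + W \<omega> \<bullet> tau d) + indicator S \<omega> * (K \<omega> * L \<omega>) \<partial>M)"
      by (rule Bochner_Integration.integral_add[OF iT iL, symmetric])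
    also have "\<dots> = (\<integral>\<omega>. indicator S \<omega> * (G \<omega> * (mu d + W \<omega> \<bullet> tau d + (rho d + W \<omega> \<bullet> eta d) * L \<omega>)) \<partial>M)"
      by (rule Bochner_Integration.integral_cong[OF refl]) (simp add: f_def K_def algebra_simps)
    finally show ?thesis unfolding cexp_def by simp
  qed
  have Ssp: "S \<subseteq> space M" unfolding S_def by auto
  have Ev1: "Ev 1 = {\<omega> \<in> space M. U \<omega> \<le> P \<omega>}" using D_def unfolding Ev_def by (auto split: if_splits)
  have pos: "0 < measure M S"
  proof (cases "d = 1")
    case True
    then show ?thesis using PD EvS by simp
  next
    case False
    then have "S = space M - Ev 1" unfolding S_def Ev1 by auto
    moreover have "Ev 1 \<in> sets M" unfolding Ev1 by measurable
    ultimately have "measure M S = 1 - measure M (Ev 1)" by (simp add: prob_compl)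
    then show ?thesis using PD by simp
  qed
  have iSm[measurable]: "indicator S \<in> borel_measurable M" by measurable
  have sqE: "integrable M (\<lambda>\<omega>. (indicator S \<omega> :: real)\<^sup>2)"
    by (rule int_eq[of M "indicator S"]) (auto intro!: integrable_real_indicator simp: less_top[symmetric] indicator_def)
  have sq1: "integrable M (\<lambda>\<omega>. (1::real)\<^sup>2)" by simp
  have sqW: "integrable M (\<lambda>\<omega>. (W \<omega> $ k)\<^sup>2)" for k using W_int by simp
  have sqEW: "integrable M (\<lambda>\<omega>. (indicator S \<omega> * W \<omega> $ k)\<^sup>2)" for k
    by (rule int_eq[OF integrable_real_mult_indicator[OF Sm sqW[of k]]]) (simp add: indicator_def)
  have sqEL: "integrable M (\<lambda>\<omega>. (indicator S \<omega> * L \<omega>)\<^sup>2)"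
  proof (rule int_eq)
    show "integrable M (\<lambda>\<omega>. indicator (Ev d) \<omega> * (lam h d (P \<omega>))\<^sup>2)" using lam_int d01 by auto
    show "indicator (Ev d) \<omega> * (lam h d (P \<omega>))\<^sup>2 = (indicator S \<omega> * L \<omega>)\<^sup>2" for \<omega>
      by (simp add: EvS L_def indicator_def)
  qed
  have sqY: "integrable M (\<lambda>\<omega>. (Y d \<omega>)\<^sup>2)" using Y_int d01 by auto
  have WjM[measurable]: "(\<lambda>\<omega>. W \<omega> $ k) \<in> borel_measurable M" for k by (rule measurable_compose[OF W_meas borel_measurable_nth])
  have iSW[measurable]: "(\<lambda>\<omega>. indicator S \<omega> * W \<omega> $ k) \<in> borel_measurable M" for k by measurable
  have iSL[measurable]: "(\<lambda>\<omega>. indicator S \<omega> * L \<omega>) \<in> borel_measurable M" by measurable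
  note pr = L2_prod[of _ M]
  have WWL: "integrable M (\<lambda>\<omega>. indicator S \<omega> * (W \<omega> $ j * W \<omega> $ k * L \<omega>))" for j k
  proof -
    have "\<forall>i j. integrable M (\<lambda>\<omega>. indicator (Ev d) \<omega> * (W \<omega> $ i * W \<omega> $ j * lam h d (P \<omega>)))"
      using WWlam_int d01 by auto
    then show ?thesis unfolding EvS L_def by blast
  qed
  have WLL: "integrable M (\<lambda>\<omega>. indicator S \<omega> * (W \<omega> $ k * (L \<omega>)\<^sup>2))" for k
  proof -
    have "\<forall>i. integrable M (\<lambda>\<omega>. indicator (Ev d) \<omega> * (W \<omega> $ i * (lam h d (P \<omega>))\<^sup>2))"
      using Wlam2_int d01 by auto
    then show ?thesis unfolding EvS L_def by blast
  qed
  have k1: "cexp M S (\<lambda>\<omega>. 1 * Yobs \<omega>) = cexp M S (\<lambda>\<omega>. 1 * (mu d + W \<omega> \<bullet> tau d + (rho d + W \<omega> \<bullet> eta d) * L \<omega>))"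
  proof (rule key)
    show "integrable M (\<lambda>\<omega>. indicator S \<omega> * (1::real))"
      by (rule int_eq[OF pr[OF iSm borel_measurable_const sqE sq1]]) simp
    show "integrable M (\<lambda>\<omega>. indicator S \<omega> * ((1::real) * W \<omega> $ k))" for k
      by (rule int_eq[OF pr[OF iSm WjM[of k] sqE sqW[of k]]]) simp
    show "integrable M (\<lambda>\<omega>. indicator S \<omega> * ((1::real) * L \<omega>))"
      by (rule int_eq[OF pr[OF iSL borel_measurable_const sqEL sq1]]) simp
    show "integrable M (\<lambda>\<omega>. indicator S \<omega> * ((1::real) * W \<omega> $ k * L \<omega>))" for k
      by (rule int_eq[OF pr[OF iSL WjM[of k] sqEL sqW[of k]]]) (simp add: ac_simps)
    show "integrable M (\<lambda>\<omega>. indicator S \<omega> * (1::real) * Y d \<omega>)"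
      by (rule int_eq[OF pr[OF iSm Ym sqE sqY]]) simp
  qed simp
  have x1: "cexp M S (\<lambda>\<omega>. 1 * (mu d + W \<omega> \<bullet> tau d + (rho d + W \<omega> \<bullet> eta d) * L \<omega>)) =
     mu d * cexp M S (\<lambda>\<omega>. 1) + (\<Sum>k\<in>UNIV. tau d $ k * cexp M S (\<lambda>\<omega>. 1 * W \<omega> $ k))
     + rho d * cexp M S (\<lambda>\<omega>. 1 * L \<omega>) + (\<Sum>k\<in>UNIV. eta d $ k * cexp M S (\<lambda>\<omega>. 1 * W \<omega> $ k * L \<omega>))"
  proof (rule cexp_expand)
    show "integrable M (\<lambda>\<omega>. indicator S \<omega> * (1::real))"
      by (rule int_eq[OF pr[OF iSm borel_measurable_const sqE sq1]]) simp
    show "integrable M (\<lambda>\<omega>. indicator S \<omega> * ((1::real) * W \<omega> $ k))" for k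
      by (rule int_eq[OF pr[OF iSm WjM[of k] sqE sqW[of k]]]) simp
    show "integrable M (\<lambda>\<omega>. indicator S \<omega> * ((1::real) * L \<omega>))"
      by (rule int_eq[OF pr[OF iSL borel_measurable_const sqEL sq1]]) simp
    show "integrable M (\<lambda>\<omega>. indicator S \<omega> * ((1::real) * W \<omega> $ k * L \<omega>))" for k
      by (rule int_eq[OF pr[OF iSL WjM[of k] sqEL sqW[of k]]]) (simp add: ac_simps)
  qed
  have kW: "cexp M S (\<lambda>\<omega>. W \<omega> $ j * Yobs \<omega>) = cexp M S (\<lambda>\<omega>. W \<omega> $ j * (mu d + W \<omega> \<bullet> tau d + (rho d + W \<omega> \<bullet> eta d) * L \<omega>))" for j
  proof (rule key)
    show "integrable M (\<lambda>\<omega>. indicator S \<omega> * W \<omega> $ j)"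
      by (rule int_eq[OF pr[OF iSm WjM[of j] sqE sqW[of j]]]) simp
    show "integrable M (\<lambda>\<omega>. indicator S \<omega> * (W \<omega> $ j * W \<omega> $ k))" for k
      by (rule int_eq[OF pr[OF iSW[of j] WjM[of k] sqEW[of j] sqW[of k]]]) (simp add: ac_simps)
    show "integrable M (\<lambda>\<omega>. indicator S \<omega> * (W \<omega> $ j * L \<omega>))"
      by (rule int_eq[OF pr[OF WjM[of j] iSL sqW[of j] sqEL]]) (simp add: ac_simps)
    show "integrable M (\<lambda>\<omega>. indicator S \<omega> * (W \<omega> $ j * W \<omega> $ k * L \<omega>))" for k
      by (rule WWL)
    show "integrable M (\<lambda>\<omega>. indicator S \<omega> * W \<omega> $ j * Y d \<omega>)"
      by (rule int_eq[OF pr[OF iSW[of j] Ym sqEW[of j] sqY]]) simp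
  qed (rule measurable_compose[OF WF borel_measurable_nth])
  have xW: "cexp M S (\<lambda>\<omega>. W \<omega> $ j * (mu d + W \<omega> \<bullet> tau d + (rho d + W \<omega> \<bullet> eta d) * L \<omega>)) =
     mu d * cexp M S (\<lambda>\<omega>. W \<omega> $ j) + (\<Sum>k\<in>UNIV. tau d $ k * cexp M S (\<lambda>\<omega>. W \<omega> $ j * W \<omega> $ k))
     + rho d * cexp M S (\<lambda>\<omega>. W \<omega> $ j * L \<omega>) + (\<Sum>k\<in>UNIV. eta d $ k * cexp M S (\<lambda>\<omega>. W \<omega> $ j * W \<omega> $ k * L \<omega>))" for j
  proof (rule cexp_expand)
    show "integrable M (\<lambda>\<omega>. indicator S \<omega> * W \<omega> $ j)"
      by (rule int_eq[OF pr[OF iSm WjM[of j] sqE sqW[of j]]]) simp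
    show "integrable M (\<lambda>\<omega>. indicator S \<omega> * (W \<omega> $ j * W \<omega> $ k))" for k
      by (rule int_eq[OF pr[OF iSW[of j] WjM[of k] sqEW[of j] sqW[of k]]]) (simp add: ac_simps)
    show "integrable M (\<lambda>\<omega>. indicator S \<omega> * (W \<omega> $ j * L \<omega>))"
      by (rule int_eq[OF pr[OF WjM[of j] iSL sqW[of j] sqEL]]) (simp add: ac_simps)
    show "integrable M (\<lambda>\<omega>. indicator S \<omega> * (W \<omega> $ j * W \<omega> $ k * L \<omega>))" for k
      by (rule WWL)
  qed
  have kL: "cexp M S (\<lambda>\<omega>. L \<omega> * Yobs \<omega>) = cexp M S (\<lambda>\<omega>. L \<omega> * (mu d + W \<omega> \<bullet> tau d + (rho d + W \<omega> \<bullet> eta d) * L \<omega>))"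
  proof (rule key)
    show "integrable M (\<lambda>\<omega>. indicator S \<omega> * L \<omega>)"
      by (rule int_eq[OF pr[OF iSL borel_measurable_const sqEL sq1]]) simp
    show "integrable M (\<lambda>\<omega>. indicator S \<omega> * (L \<omega> * W \<omega> $ k))" for k
      by (rule int_eq[OF pr[OF iSL WjM[of k] sqEL sqW[of k]]]) (simp add: ac_simps)
    show "integrable M (\<lambda>\<omega>. indicator S \<omega> * (L \<omega> * L \<omega>))"
      by (rule int_eq[OF pr[OF iSL iSL sqEL sqEL]]) (simp add: indicator_def)
    show "integrable M (\<lambda>\<omega>. indicator S \<omega> * (L \<omega> * W \<omega> $ k * L \<omega>))" for k
      by (rule int_eq[OF WLL[of k]]) (simp add: power2_eq_square ac_simps)
    show "integrable M (\<lambda>\<omega>. indicator S \<omega> * L \<omega> * Y d \<omega>)"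
      by (rule int_eq[OF pr[OF iSL Ym sqEL sqY]]) simp
  qed measurable
  have xL: "cexp M S (\<lambda>\<omega>. L \<omega> * (mu d + W \<omega> \<bullet> tau d + (rho d + W \<omega> \<bullet> eta d) * L \<omega>)) =
     mu d * cexp M S L + (\<Sum>k\<in>UNIV. tau d $ k * cexp M S (\<lambda>\<omega>. L \<omega> * W \<omega> $ k))
     + rho d * cexp M S (\<lambda>\<omega>. L \<omega> * L \<omega>) + (\<Sum>k\<in>UNIV. eta d $ k * cexp M S (\<lambda>\<omega>. L \<omega> * W \<omega> $ k * L \<omega>))"
  proof (rule cexp_expand)
    show "integrable M (\<lambda>\<omega>. indicator S \<omega> * L \<omega>)"
      by (rule int_eq[OF pr[OF iSL borel_measurable_const sqEL sq1]]) simp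
    show "integrable M (\<lambda>\<omega>. indicator S \<omega> * (L \<omega> * W \<omega> $ k))" for k
      by (rule int_eq[OF pr[OF iSL WjM[of k] sqEL sqW[of k]]]) (simp add: ac_simps)
    show "integrable M (\<lambda>\<omega>. indicator S \<omega> * (L \<omega> * L \<omega>))"
      by (rule int_eq[OF pr[OF iSL iSL sqEL sqEL]]) (simp add: indicator_def)
    show "integrable M (\<lambda>\<omega>. indicator S \<omega> * (L \<omega> * W \<omega> $ k * L \<omega>))" for k
      by (rule int_eq[OF WLL[of k]]) (simp add: power2_eq_square ac_simps)
  qed
  define m where "m = cvec M S W"
  define l where "l = cexp M S L"
  define Sww where "Sww j k = cexp M S (\<lambda>\<omega>. W \<omega> $ j * W \<omega> $ k)" for j k
  define Sll where "Sll = cexp M S (\<lambda>\<omega>. L \<omega> * L \<omega>)"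
  have mk: "cexp M S (\<lambda>\<omega>. W \<omega> $ k) = m $ k" for k by (simp add: m_def cvec_def)
  have c1: "cexp M S (\<lambda>\<omega>. W \<omega> $ k * L \<omega>) = m $ k * l" for k
  proof -
    have "ccov M (Ev d) (\<lambda>\<omega>. W \<omega> $ k) (\<lambda>\<omega>. lam h d (P \<omega>)) = 0" using cov1 d01 by auto
    then show ?thesis unfolding ccov_def EvS L_def[symmetric] by (simp add: mk l_def)
  qed
  have c2: "cexp M S (\<lambda>\<omega>. W \<omega> $ j * W \<omega> $ k * L \<omega>) = Sww j k * l" for j k
  proof -
    have "ccov M (Ev d) (\<lambda>\<omega>. W \<omega> $ j * W \<omega> $ k) (\<lambda>\<omega>. lam h d (P \<omega>)) = 0" using cov2 d01 by auto
    then show ?thesis unfolding ccov_def EvS L_def[symmetric] by (simp add: Sww_def l_def)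
  qed
  have c3: "cexp M S (\<lambda>\<omega>. W \<omega> $ k * (L \<omega>)\<^sup>2) = m $ k * cexp M S (\<lambda>\<omega>. (L \<omega>)\<^sup>2)" for k
  proof -
    have "ccov M (Ev d) (\<lambda>\<omega>. W \<omega> $ k) (\<lambda>\<omega>. (lam h d (P \<omega>))\<^sup>2) = 0" using cov3 d01 by auto
    then show ?thesis unfolding ccov_def EvS by (simp add: mk L_def)
  qed
  have Lsq: "cexp M S (\<lambda>\<omega>. (L \<omega>)\<^sup>2) = Sll" by (simp add: Sll_def power2_eq_square)
  have one: "cexp M S (\<lambda>\<omega>. 1) = 1"
  proof -
    have "(\<integral>\<omega>. indicator S \<omega> * (1::real) \<partial>M) = measure M S"
      using Ssp by (simp add: Int_absorb2)
    then show ?thesis using pos unfolding cexp_def by simp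
  qed
  have LW: "cexp M S (\<lambda>\<omega>. L \<omega> * W \<omega> $ k) = m $ k * l" for k
    using c1[of k] by (simp add: mult.commute)
  have LWL: "cexp M S (\<lambda>\<omega>. L \<omega> * W \<omega> $ k * L \<omega>) = m $ k * Sll" for k
  proof -
    have "(\<lambda>\<omega>. L \<omega> * W \<omega> $ k * L \<omega>) = (\<lambda>\<omega>. W \<omega> $ k * (L \<omega>)\<^sup>2)"
      by (rule ext) (simp add: power2_eq_square ac_simps)
    then show ?thesis using c3[of k] Lsq by simp
  qed
  have rC: "regr W L \<omega> $ RConst = 1" "regr W L \<omega> $ RCov k = W \<omega> $ k" "regr W L \<omega> $ RLam = L \<omega>" for \<omega> k
    by (simp_all add: regr_def)
  define A where "A = (\<chi> i j. cexp M S (\<lambda>\<omega>. regr W L \<omega> $ i * regr W L \<omega> $ j))"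
  define b where "b = (\<chi> i. cexp M S (\<lambda>\<omega>. regr W L \<omega> $ i * Yobs \<omega>))"
  have lsc: "ls_coef M (Ev d) W (\<lambda>\<omega>. lam h d (P \<omega>)) Yobs = matrix_inv A *v b"
    unfolding ls_coef_def A_def b_def EvS L_def ..
  have sol: "matrix_inv A *v b = (\<chi> i. case i of RConst \<Rightarrow> mu d - (m \<bullet> eta d) * l
                                   | RCov k \<Rightarrow> tau d $ k + l * eta d $ k | RLam \<Rightarrow> rho d + m \<bullet> eta d)"
  proof (rule ls_solve)
    show "A $ RConst $ RConst = 1" by (simp add: A_def rC one)
    show "A $ RConst $ RCov k = m $ k" for k by (simp add: A_def rC mk)
    show "A $ RCov k $ RConst = m $ k" for k by (simp add: A_def rC mk)
    show "A $ RConst $ RLam = l" by (simp add: A_def rC l_def)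
    show "A $ RLam $ RConst = l" by (simp add: A_def rC l_def)
    show "A $ RCov j $ RCov k = Sww j k" for j k by (simp add: A_def rC Sww_def)
    show "A $ RCov j $ RLam = m $ j * l" for j by (simp add: A_def rC c1)
    show "A $ RLam $ RCov j = m $ j * l" for j by (simp add: A_def rC LW)
    show "A $ RLam $ RLam = Sll" by (simp add: A_def rC Sll_def)
    have "invertible (\<chi> i j. ccov M (Ev d) (\<lambda>\<omega>. W \<omega> $ i) (\<lambda>\<omega>. W \<omega> $ j))" using VarW_nonsing d01 by auto
    then show "invertible (\<chi> j k. Sww j k - m $ j * m $ k)" unfolding ccov_def EvS by (simp add: Sww_def mk)
    have "ccov M (Ev d) (\<lambda>\<omega>. lam h d (P \<omega>)) (\<lambda>\<omega>. lam h d (P \<omega>)) > 0" using Varlam_pos d01 by auto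
    then show "Sll - l * l \<noteq> 0" unfolding ccov_def EvS L_def[symmetric] by (simp add: Sll_def l_def)
    have "b $ RConst = mu d * 1 + (\<Sum>k\<in>UNIV. tau d $ k * m $ k) + rho d * l + (\<Sum>k\<in>UNIV. eta d $ k * (m $ k * l))"
      using k1 x1 by (simp add: b_def rC one mk c1 l_def[symmetric])
    then show "b $ RConst = mu d + m \<bullet> tau d + rho d * l + (m \<bullet> eta d) * l"
      by (simp add: inner_sum_vec sum_distrib_left sum_distrib_right ac_simps)
    fix j
    have "b $ RCov j = mu d * m $ j + (\<Sum>k\<in>UNIV. tau d $ k * Sww j k) + rho d * (m $ j * l) + (\<Sum>k\<in>UNIV. eta d $ k * (Sww j k * l))"
      using kW[of j] xW[of j] by (simp add: b_def rC mk c1 c2 Sww_def[symmetric])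
    then show "b $ RCov j = mu d * m $ j + (\<Sum>k\<in>UNIV. Sww j k * tau d $ k) + rho d * (m $ j * l) + (\<Sum>k\<in>UNIV. Sww j k * eta d $ k) * l"
      by (simp add: sum_distrib_left sum_distrib_right ac_simps)
  next
    have "b $ RLam = mu d * l + (\<Sum>k\<in>UNIV. tau d $ k * (m $ k * l)) + rho d * Sll + (\<Sum>k\<in>UNIV. eta d $ k * (m $ k * Sll))"
      using kL xL by (simp add: b_def rC LW LWL l_def[symmetric] Sll_def[symmetric])
    then show "b $ RLam = mu d * l + (m \<bullet> tau d) * l + rho d * Sll + (m \<bullet> eta d) * Sll"
      by (simp add: inner_sum_vec sum_distrib_left sum_distrib_right ac_simps)
  qed
  show ?thesis using trans[OF lsc sol] unfolding m_def l_def L_def EvS by simp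
qed


theorem theorem4:
  fixes M :: "'o measure" and Mz :: "'z measure"
    and Y :: "nat \<Rightarrow> 'o \<Rightarrow> real" and Yobs D U P :: "'o \<Rightarrow> real"
    and Z :: "'o \<Rightarrow> 'z" and W :: "'o \<Rightarrow> real^'L"
    and h :: "real \<Rightarrow> real"
    and mu rho :: "nat \<Rightarrow> real" and tau eta :: "nat \<Rightarrow> real^'L"
  defines "Ev \<equiv> \<lambda>d::nat. {\<omega> \<in> space M. D \<omega> = real d}"
    and "bt \<equiv> \<lambda>d::nat. ls_coef M {\<omega> \<in> space M. D \<omega> = real d} W (\<lambda>\<omega>. lam h d (P \<omega>)) Yobs"
  assumes prob: "prob_space M"
    (* measurability *)
    and Z_meas: "Z \<in> measurable M Mz" and W_meas: "W \<in> borel_measurable M"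
    and U_meas: "U \<in> borel_measurable M"
    and Y_meas: "\<forall>d\<in>{0,1}. Y d \<in> borel_measurable M"
    (* U | W is uniform on [0,1] *)
    and U_unif: "\<forall>B\<in>sets borel. AE \<omega> in M.
         real_cond_exp M (sigma_gen M borel W) (indicator (U -` B \<inter> space M)) \<omega>
         = measure lborel (B \<inter> {0..1})"
    (* Z independent of U given W *)
    and Z_U_indep: "cond_indep M (sigma_gen M borel W) Z Mz U borel"
    (* P = P(D = 1 | Z, W) *)
    and P_meas: "P \<in> borel_measurable (sigma_gen M (Mz \<Otimes>\<^sub>M borel) (\<lambda>\<omega>. (Z \<omega>, W \<omega>)))"
    and P_def: "AE \<omega> in M. P \<omega> = real_cond_exp M (sigma_gen M (Mz \<Otimes>\<^sub>M borel) (\<lambda>\<omega>. (Z \<omega>, W \<omega>)))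
                     (indicator {\<omega> \<in> space M. D \<omega> = 1}) \<omega>"
    and P_range: "AE \<omega> in M. 0 < P \<omega> \<and> P \<omega> < 1"
    (* selection equation and observed outcome *)
    and D_def: "\<forall>\<omega>\<in>space M. D \<omega> = (if U \<omega> \<le> P \<omega> then 1 else 0)"
    and Yobs_def: "\<forall>\<omega>\<in>space M. Yobs \<omega> = (1 - D \<omega>) * Y 0 \<omega> + D \<omega> * Y 1 \<omega>"
    (* E[Y_d | Z,W,U] = E[Y_d | W,U] = mu_d + W'tau_d + rho_d(W) h(U) *)
    and Y_ZWU: "\<forall>d\<in>{0,1}. AE \<omega> in M.
         real_cond_exp M (sigma_gen M (Mz \<Otimes>\<^sub>M (borel \<Otimes>\<^sub>M borel)) (\<lambda>\<omega>. (Z \<omega>, W \<omega>, U \<omega>))) (Y d) \<omega>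
         = mu d + W \<omega> \<bullet> tau d + (rho d + W \<omega> \<bullet> eta d) * h (U \<omega>)"
    and Y_WU: "\<forall>d\<in>{0,1}. AE \<omega> in M.
         real_cond_exp M (sigma_gen M (borel \<Otimes>\<^sub>M borel) (\<lambda>\<omega>. (W \<omega>, U \<omega>))) (Y d) \<omega>
         = mu d + W \<omega> \<bullet> tau d + (rho d + W \<omega> \<bullet> eta d) * h (U \<omega>)"
    (* h strictly increasing, continuous on (0,1), integrating to zero *)
    and h_mono: "strict_mono_on {0<..<1} h"
    and h_cont: "continuous_on {0<..<1} h"
    and h_int: "interval_lebesgue_integrable lborel 0 1 h"
    and h_zero: "(LBINT u=0..1. h u) = 0"
    (* finite second moments *)
    and Y_int: "\<forall>d\<in>{0,1}. integrable M (Y d) \<and> integrable M (\<lambda>\<omega>. (Y d \<omega>)\<^sup>2)"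
    and W_int: "\<forall>i. integrable M (\<lambda>\<omega>. (W \<omega> $ i)\<^sup>2)"
    and lam_int: "\<forall>d\<in>{0,1}. integrable M (\<lambda>\<omega>. indicator (Ev d) \<omega> * (lam h d (P \<omega>))\<^sup>2)"
    and WWlam_int: "\<forall>d\<in>{0,1}. \<forall>i j. integrable M
          (\<lambda>\<omega>. indicator (Ev d) \<omega> * (W \<omega> $ i * W \<omega> $ j * lam h d (P \<omega>)))"
    and Wlam2_int: "\<forall>d\<in>{0,1}. \<forall>i. integrable M
          (\<lambda>\<omega>. indicator (Ev d) \<omega> * (W \<omega> $ i * (lam h d (P \<omega>))\<^sup>2))"
    (* nondegeneracy *)
    and VarW_nonsing: "\<forall>d\<in>{0,1}.
          invertible (\<chi> i j. ccov M (Ev d) (\<lambda>\<omega>. W \<omega> $ i) (\<lambda>\<omega>. W \<omega> $ j))"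
    and Varlam_pos: "\<forall>d\<in>{0,1}.
          ccov M (Ev d) (\<lambda>\<omega>. lam h d (P \<omega>)) (\<lambda>\<omega>. lam h d (P \<omega>)) > 0"
    and PD: "0 < measure M (Ev 1) \<and> measure M (Ev 1) < 1"
    (* covariance restrictions of part (1) *)
    and cov1: "\<forall>d\<in>{0,1}. \<forall>i. ccov M (Ev d) (\<lambda>\<omega>. W \<omega> $ i) (\<lambda>\<omega>. lam h d (P \<omega>)) = 0"
    and cov2: "\<forall>d\<in>{0,1}. \<forall>i j.
          ccov M (Ev d) (\<lambda>\<omega>. W \<omega> $ i * W \<omega> $ j) (\<lambda>\<omega>. lam h d (P \<omega>)) = 0"
    and cov3: "\<forall>d\<in>{0,1}. \<forall>i.
          ccov M (Ev d) (\<lambda>\<omega>. W \<omega> $ i) (\<lambda>\<omega>. (lam h d (P \<omega>))\<^sup>2) = 0"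
  shows
    "(ls_mu (bt 1) - ls_mu (bt 0) + evec M W \<bullet> (ls_tau (bt 1) - ls_tau (bt 0)))
       - (mu 1 - mu 0 + evec M W \<bullet> (tau 1 - tau 0))
     = (evec M W - cvec M (Ev 1) W) \<bullet> eta 1 * cexp M (Ev 1) (\<lambda>\<omega>. lam h 1 (P \<omega>))
       - (evec M W - cvec M (Ev 0) W) \<bullet> eta 0 * cexp M (Ev 0) (\<lambda>\<omega>. lam h 0 (P \<omega>))
   \<and> (\<forall>w :: real^'L.
       (ls_mu (bt 1) - ls_mu (bt 0) + w \<bullet> (ls_tau (bt 1) - ls_tau (bt 0)))
         - (mu 1 - mu 0 + w \<bullet> (tau 1 - tau 0))
       = (w - cvec M (Ev 1) W) \<bullet> eta 1 * cexp M (Ev 1) (\<lambda>\<omega>. lam h 1 (P \<omega>))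
         - (w - cvec M (Ev 0) W) \<bullet> eta 0 * cexp M (Ev 0) (\<lambda>\<omega>. lam h 0 (P \<omega>)))
   \<and> (ls_rho (bt 1) - ls_rho (bt 0))
       - (\<integral>\<omega>. (rho 1 + W \<omega> \<bullet> eta 1) - (rho 0 + W \<omega> \<bullet> eta 0) \<partial>M)
     = (cvec M (Ev 1) W - cvec M (Ev 0) W)
         \<bullet> (measure M (Ev 0) *\<^sub>R eta 1 + measure M (Ev 1) *\<^sub>R eta 0)
   \<and> (cvec M (Ev 1) W = cvec M (Ev 0) W \<longrightarrow>
       ls_mu (bt 1) - ls_mu (bt 0) + evec M W \<bullet> (ls_tau (bt 1) - ls_tau (bt 0))
         = mu 1 - mu 0 + evec M W \<bullet> (tau 1 - tau 0)
       \<and> ls_rho (bt 1) - ls_rho (bt 0)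
         = (\<integral>\<omega>. (rho 1 + W \<omega> \<bullet> eta 1) - (rho 0 + W \<omega> \<bullet> eta 0) \<partial>M))"
proof -
  interpret prob_space M by (rule prob)
  have C: "ls_coef M (Ev d) W (\<lambda>\<omega>. lam h d (P \<omega>)) Yobs =
    (\<chi> i. case i of RConst \<Rightarrow> mu d - (cvec M (Ev d) W \<bullet> eta d) * cexp M (Ev d) (\<lambda>\<omega>. lam h d (P \<omega>))
       | RCov k \<Rightarrow> tau d $ k + cexp M (Ev d) (\<lambda>\<omega>. lam h d (P \<omega>)) * eta d $ k
       | RLam \<Rightarrow> rho d + cvec M (Ev d) W \<bullet> eta d)" if d01: "d = 0 \<or> d = 1" for d
    using coef_formula[OF assms(3-)[unfolded Ev_def] d01] unfolding Ev_def .
  have mu_eq: "ls_mu (bt d) = mu d - (cvec M (Ev d) W \<bullet> eta d) * cexp M (Ev d) (\<lambda>\<omega>. lam h d (P \<omega>))"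
    if "d = 0 \<or> d = 1" for d
    using C[OF that] unfolding ls_mu_def bt_def Ev_def by simp
  have tau_eq: "ls_tau (bt d) = tau d + cexp M (Ev d) (\<lambda>\<omega>. lam h d (P \<omega>)) *\<^sub>R eta d"
    if "d = 0 \<or> d = 1" for d
    using C[OF that] unfolding ls_tau_def bt_def Ev_def by (simp add: vec_eq_iff)
  have rho_eq: "ls_rho (bt d) = rho d + cvec M (Ev d) W \<bullet> eta d"
    if "d = 0 \<or> d = 1" for d
    using C[OF that] unfolding ls_rho_def bt_def Ev_def by simp
  define m1 where "m1 = cvec M (Ev 1) W"
  define m0 where "m0 = cvec M (Ev 0) W"
  define l1 where "l1 = cexp M (Ev 1) (\<lambda>\<omega>. lam h 1 (P \<omega>))"
  define l0 where "l0 = cexp M (Ev 0) (\<lambda>\<omega>. lam h 0 (P \<omega>))"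
  define p1 where "p1 = measure M (Ev 1)"
  define p0 where "p0 = measure M (Ev 0)"
  define e where "e = evec M W"
  note [measurable] = W_meas U_meas
  have PM[measurable]: "P \<in> borel_measurable M"
  proof -
    have "(\<lambda>\<omega>. (Z \<omega>, W \<omega>)) \<in> measurable M (Mz \<Otimes>\<^sub>M borel)" using Z_meas W_meas by measurable
    from measurable_from_subalg[OF subalg_sigma_gen[OF this] P_meas] show ?thesis .
  qed
  have Ev1: "Ev 1 = {\<omega> \<in> space M. U \<omega> \<le> P \<omega>}" using D_def unfolding Ev_def by (auto split: if_splits)
  have Ev0: "Ev 0 = space M - Ev 1" using D_def unfolding Ev_def by (auto split: if_splits)
  have Ev1m[measurable]: "Ev 1 \<in> sets M" unfolding Ev1 by measurable
  have Ev0m[measurable]: "Ev 0 \<in> sets M" unfolding Ev0 by measurable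
  have p01: "p0 = 1 - p1" unfolding p0_def p1_def Ev0 using prob_compl[OF Ev1m] by simp
  have p1pos: "p1 > 0" and p0pos: "p0 > 0" using PD p01 unfolding p1_def by auto
  have WkM[measurable]: "(\<lambda>\<omega>. W \<omega> $ k) \<in> borel_measurable M" for k
    by (rule measurable_compose[OF W_meas borel_measurable_nth])
  have intW: "integrable M (\<lambda>\<omega>. W \<omega> $ k)" for k
  proof -
    have "integrable M (\<lambda>\<omega>. W \<omega> $ k * 1)"
      by (rule L2_prod) (use W_int in auto)
    then show ?thesis by simp
  qed
  have split: "\<integral>\<omega>. W \<omega> $ k \<partial>M = p1 * m1 $ k + p0 * m0 $ k" for k
  proof -
    have i1: "integrable M (\<lambda>\<omega>. indicator (Ev 1) \<omega> * W \<omega> $ k)"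
      using integrable_real_mult_indicator[OF Ev1m intW[of k]] by (simp add: mult.commute)
    have i0: "integrable M (\<lambda>\<omega>. indicator (Ev 0) \<omega> * W \<omega> $ k)"
      using integrable_real_mult_indicator[OF Ev0m intW[of k]] by (simp add: mult.commute)
    have "\<integral>\<omega>. W \<omega> $ k \<partial>M = \<integral>\<omega>. indicator (Ev 1) \<omega> * W \<omega> $ k + indicator (Ev 0) \<omega> * W \<omega> $ k \<partial>M"
      by (rule Bochner_Integration.integral_cong[OF refl]) (auto simp: Ev0 indicator_def)
    also have "\<dots> = (\<integral>\<omega>. indicator (Ev 1) \<omega> * W \<omega> $ k \<partial>M) + (\<integral>\<omega>. indicator (Ev 0) \<omega> * W \<omega> $ k \<partial>M)"
      by (rule Bochner_Integration.integral_add[OF i1 i0])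
    also have "\<dots> = p1 * m1 $ k + p0 * m0 $ k"
      using p1pos p0pos unfolding m1_def m0_def p1_def p0_def cvec_def cexp_def by simp
    finally show ?thesis .
  qed
  have e_split: "e = p1 *\<^sub>R m1 + p0 *\<^sub>R m0"
    unfolding e_def evec_def by (simp add: vec_eq_iff split)
  have intInner: "(\<integral>\<omega>. (rho 1 + W \<omega> \<bullet> eta 1) - (rho 0 + W \<omega> \<bullet> eta 0) \<partial>M) = rho 1 - rho 0 + e \<bullet> (eta 1 - eta 0)"
  proof -
    have "(\<integral>\<omega>. (rho 1 + W \<omega> \<bullet> eta 1) - (rho 0 + W \<omega> \<bullet> eta 0) \<partial>M)
        = (\<integral>\<omega>. (rho 1 - rho 0) + (\<Sum>k\<in>UNIV. (eta 1 $ k - eta 0 $ k) * W \<omega> $ k) \<partial>M)"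
      by (rule Bochner_Integration.integral_cong[OF refl])
         (simp add: inner_sum_vec algebra_simps sum_subtractf)
    also have "\<dots> = (rho 1 - rho 0) + (\<Sum>k\<in>UNIV. (eta 1 $ k - eta 0 $ k) * (\<integral>\<omega>. W \<omega> $ k \<partial>M))"
      using intW by (simp add: Bochner_Integration.integral_add Bochner_Integration.integral_sum prob_space)
    also have "\<dots> = rho 1 - rho 0 + e \<bullet> (eta 1 - eta 0)"
      unfolding e_def evec_def by (simp add: inner_sum_vec mult.commute)
    finally show ?thesis .
  qed
  have mu1: "ls_mu (bt 1) = mu 1 - (m1 \<bullet> eta 1) * l1" using mu_eq[of 1] unfolding m1_def l1_def by simp
  have mu0: "ls_mu (bt 0) = mu 0 - (m0 \<bullet> eta 0) * l0" using mu_eq[of 0] unfolding m0_def l0_def by simp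
  have tau1: "ls_tau (bt 1) = tau 1 + l1 *\<^sub>R eta 1" using tau_eq[of 1] unfolding l1_def by simp
  have tau0: "ls_tau (bt 0) = tau 0 + l0 *\<^sub>R eta 0" using tau_eq[of 0] unfolding l0_def by simp
  have rho1: "ls_rho (bt 1) = rho 1 + m1 \<bullet> eta 1" using rho_eq[of 1] unfolding m1_def by simp
  have rho0: "ls_rho (bt 0) = rho 0 + m0 \<bullet> eta 0" using rho_eq[of 0] unfolding m0_def by simp
  have cate: "(ls_mu (bt 1) - ls_mu (bt 0) + w \<bullet> (ls_tau (bt 1) - ls_tau (bt 0)))
         - (mu 1 - mu 0 + w \<bullet> (tau 1 - tau 0))
       = (w - m1) \<bullet> eta 1 * l1 - (w - m0) \<bullet> eta 0 * l0" for w
    unfolding mu1 mu0 tau1 tau0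
    by (simp add: inner_diff_left inner_diff_right inner_add_right algebra_simps)
  have slope: "(ls_rho (bt 1) - ls_rho (bt 0)) - (\<integral>\<omega>. (rho 1 + W \<omega> \<bullet> eta 1) - (rho 0 + W \<omega> \<bullet> eta 0) \<partial>M)
     = (m1 - m0) \<bullet> (p0 *\<^sub>R eta 1 + p1 *\<^sub>R eta 0)"
    unfolding intInner rho1 rho0 e_split p01
    by (simp add: inner_diff_left inner_diff_right inner_add_left inner_add_right algebra_simps)
  show ?thesis
  proof (intro conjI allI impI)
    show "(ls_mu (bt 1) - ls_mu (bt 0) + evec M W \<bullet> (ls_tau (bt 1) - ls_tau (bt 0)))
       - (mu 1 - mu 0 + evec M W \<bullet> (tau 1 - tau 0))
     = (evec M W - cvec M (Ev 1) W) \<bullet> eta 1 * cexp M (Ev 1) (\<lambda>\<omega>. lam h 1 (P \<omega>))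
       - (evec M W - cvec M (Ev 0) W) \<bullet> eta 0 * cexp M (Ev 0) (\<lambda>\<omega>. lam h 0 (P \<omega>))"
      using cate[of "evec M W"] unfolding m1_def m0_def l1_def l0_def .
    fix w :: "real^'L"
    show "(ls_mu (bt 1) - ls_mu (bt 0) + w \<bullet> (ls_tau (bt 1) - ls_tau (bt 0)))
         - (mu 1 - mu 0 + w \<bullet> (tau 1 - tau 0))
       = (w - cvec M (Ev 1) W) \<bullet> eta 1 * cexp M (Ev 1) (\<lambda>\<omega>. lam h 1 (P \<omega>))
         - (w - cvec M (Ev 0) W) \<bullet> eta 0 * cexp M (Ev 0) (\<lambda>\<omega>. lam h 0 (P \<omega>))"
      using cate[of w] unfolding m1_def m0_def l1_def l0_def .
  next
    show "(ls_rho (bt 1) - ls_rho (bt 0))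
       - (\<integral>\<omega>. (rho 1 + W \<omega> \<bullet> eta 1) - (rho 0 + W \<omega> \<bullet> eta 0) \<partial>M)
     = (cvec M (Ev 1) W - cvec M (Ev 0) W)
         \<bullet> (measure M (Ev 0) *\<^sub>R eta 1 + measure M (Ev 1) *\<^sub>R eta 0)"
      using slope unfolding m1_def m0_def p1_def p0_def .
  next
    assume eq: "cvec M (Ev 1) W = cvec M (Ev 0) W"
    then have mm: "m1 = m0" unfolding m1_def m0_def .
    have em: "e = m1" using e_split mm p01 by (simp add: scaleR_left_distrib[symmetric])
    show "ls_mu (bt 1) - ls_mu (bt 0) + evec M W \<bullet> (ls_tau (bt 1) - ls_tau (bt 0))
         = mu 1 - mu 0 + evec M W \<bullet> (tau 1 - tau 0)"
      using cate[of "evec M W"] em mm unfolding e_def by simp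
    show "ls_rho (bt 1) - ls_rho (bt 0)
         = (\<integral>\<omega>. (rho 1 + W \<omega> \<bullet> eta 1) - (rho 0 + W \<omega> \<bullet> eta 0) \<partial>M)"
      using slope mm by simp
  qed
qed

end
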